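(* Let $k\geq2$ and let $L=(l_1,\dots,l_k)$ be generic and reduced positive integers with sum $n$, let $T=Tonn^{n,k}(L)$ with base vertex $v_0$, and let $\widetilde T$ be its simplicial universal cover. Define $\Omega$ on vertices of $\widetilde T$ by $\Omega([\alpha])=\omega(\alpha)=\sum_{e\in\alpha}\omega(e)\in\Lambda$. Then $\Omega$ is a well-defined isomorphism of simplicial complexes $\widetilde T\to\mathcal{D}_\Lambda$.
   Context: The generalized tonnetz $Tonn^{n,k}(L)$ is the simplicial complex on vertex set $\mathbb{Z}_n$ whose maximal simplices are $\Delta(x;\sigma)=\{x,\,x+l_{\sigma(1)},\dots,x+l_{\sigma(1)}+\dots+l_{\sigma(k-1)}\}$ for $x\in\mathbb{Z}_n$, $\sigma\in S_k$. $L$ is generic if for all $I,J\subseteq[k]$, $\sum_{i\in I}l_i=\sum_{j\in J}l_j$ implies $I=J$; reduced if $\gcd(l_1,\dots,l_k)=1$. The vector 1-cocycle $\omega$ assigns to the oriented 1-simplex $(u,v)$ of $L$-type $I$ (the unique nonempty $I\subseteq[k]$ with $v-u\equiv\sum_{j\in I}l_j\pmod n$) the vector $a_I=\sum_{i\in I}a_i$, where $a_i=ke_i-(1,\dots,1)\in\mathbb{Z}^k$; $a_\emptyset=0$. Simplicial universal cover: vertices of $\widetilde T$ are combinatorial homotopy classes (rel end-points) of edge-paths starting at $v_0$; a set of such classes $\{[\alpha_0],\dots,[\alpha_d]\}$ with end-points $x_0,\dots,x_d$ is a simplex iff $\{x_0,\dots,x_d\}$ is a simplex of $T$ and for all $i\neq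 j$ the loop $\alpha_i e\alpha_j^{-1}$ (with $e$ the edge from $x_i$ to $x_j$) is null-homotopic. $\Lambda=\{x\in\mathbb{Z}^k:\sum x_i=0,\text{ all }x_i\text{ congruent mod }k\}$. $\mathcal{D}_\Lambda$ (the Delone triangulation of $H_0=\{x\in\mathbb{R}^k:\sum x_i=0\}$ for $\Lambda$) is the simplicial complex with vertex set $\Lambda$ whose simplices are the sets $\{z+a_{I_1},\dots,z+a_{I_s}\}$ with $z\in\Lambda$ and $I_1\subsetneq I_2\subsetneq\dots\subsetneq I_s\subsetneq[k]$. *)

theory Defs
  imports "HOL-Combinatorics.Permutations"
begin

text \<open>Conventions: the generators are indexed by 0..k-1 (paper: 1..k), given by
  a function l :: nat => int.  Vertices of Z_n are the integers 0..n-1.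
  A simplicial complex is represented by its set of (nonempty, finite) faces.
  Vectors of Z^k are functions nat => int vanishing outside {..<k}.\<close>

definition tonn_max_simplex :: "int \<Rightarrow> nat \<Rightarrow> (nat \<Rightarrow> int) \<Rightarrow> int \<Rightarrow> (nat \<Rightarrow> nat) \<Rightarrow> int set" where
  "tonn_max_simplex n k l x \<sigma> = {(x + (\<Sum>j<i. l (\<sigma> j))) mod n | i. i < k}"

definition tonnetz :: "int \<Rightarrow> nat \<Rightarrow> (nat \<Rightarrow> int) \<Rightarrow> int set set" where
  "tonnetz n k l = {S. S \<noteq> {} \<and> (\<exists>x\<in>{0..<n}. \<exists>\<sigma>. \<sigma> permutes {..<k} \<and> S \<subseteq> tonn_max_simplex n k l x \<sigma>)}"

definition generic :: "nat \<Rightarrow> (nat \<Rightarrow> int) \<Rightarrow> bool" where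
  "generic k l \<longleftrightarrow> (\<forall>I J. I \<subseteq> {..<k} \<longrightarrow> J \<subseteq> {..<k} \<longrightarrow> sum l I = sum l J \<longrightarrow> I = J)"

definition reduced :: "nat \<Rightarrow> (nat \<Rightarrow> int) \<Rightarrow> bool" where
  "reduced k l \<longleftrightarrow> Gcd (l ` {..<k}) = 1"

definition edge_path :: "'v set set \<Rightarrow> 'v list \<Rightarrow> bool" where
  "edge_path F p \<longleftrightarrow> p \<noteq> [] \<and> (\<forall>x\<in>set p. {x} \<in> F) \<and>
     (\<forall>i. Suc i < length p \<longrightarrow> {p ! i, p ! Suc i} \<in> F)"

definition elem_red :: "'v set set \<Rightarrow> ('v list \<times> 'v list) set" where
  "elem_red F = {(xs @ v # ys, xs @ ys) | xs v ys. edge_path F (xs @ v # ys) \<and> xs \<noteq> [] \<and>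
      (v = last xs \<or> (ys \<noteq> [] \<and> {last xs, v, hd ys} \<in> F))}"

definition comb_htp :: "'v set set \<Rightarrow> ('v list \<times> 'v list) set" where
  "comb_htp F = (elem_red F \<union> (elem_red F)\<inverse>)\<^sup>*"

definition htp_class :: "'v set set \<Rightarrow> 'v list \<Rightarrow> 'v list set" where
  "htp_class F p = {q. (p, q) \<in> comb_htp F}"

definition cover_vertices :: "'v set set \<Rightarrow> 'v \<Rightarrow> 'v list set set" where
  "cover_vertices F v0 = {htp_class F p | p. edge_path F p \<and> hd p = v0}"

definition cover_faces :: "'v set set \<Rightarrow> 'v \<Rightarrow> 'v list set set set" where
  "cover_faces F v0 = {S. S \<noteq> {} \<and> finite S \<and> S \<subseteq> cover_vertices F v0 \<and>
      {last \<alpha> | \<alpha>. \<alpha> \<in> \<Union>S} \<in> F \<and>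
      (\<forall>c\<in>S. \<forall>c'\<in>S. \<forall>\<alpha>\<in>c. \<forall>\<beta>\<in>c'. (\<alpha> @ rev \<beta>, [v0]) \<in> comb_htp F)}"

text \<open>a_I = sum_{i in I} (k e_i - (1,...,1)).\<close>
definition avec :: "nat \<Rightarrow> nat set \<Rightarrow> (nat \<Rightarrow> int)" where
  "avec k I = (\<lambda>i. if i < k then (if i \<in> I then int k else 0) - int (card I) else 0)"

definition ltype :: "int \<Rightarrow> nat \<Rightarrow> (nat \<Rightarrow> int) \<Rightarrow> int \<Rightarrow> int \<Rightarrow> nat set" where
  "ltype n k l u v = (THE I. I \<noteq> {} \<and> I \<subseteq> {..<k} \<and> (v - u) mod n = (sum l I) mod n)"

definition omega_edge :: "int \<Rightarrow> nat \<Rightarrow> (nat \<Rightarrow> int) \<Rightarrow> int \<Rightarrow> int \<Rightarrow> (nat \<Rightarrow> int)" where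
  "omega_edge n k l u v = avec k (ltype n k l u v)"

definition omega_path :: "int \<Rightarrow> nat \<Rightarrow> (nat \<Rightarrow> int) \<Rightarrow> int list \<Rightarrow> (nat \<Rightarrow> int)" where
  "omega_path n k l p = (\<lambda>c. \<Sum>i<length p - 1. omega_edge n k l (p ! i) (p ! Suc i) c)"

definition Lambda :: "nat \<Rightarrow> (nat \<Rightarrow> int) set" where
  "Lambda k = {x. (\<forall>i\<ge>k. x i = 0) \<and> (\<Sum>i<k. x i) = 0 \<and>
      (\<forall>i<k. \<forall>j<k. x i mod int k = x j mod int k)}"

definition delone_faces :: "nat \<Rightarrow> (nat \<Rightarrow> int) set set" where
  "delone_faces k = {S. \<exists>z\<in>Lambda k. \<exists>C. finite C \<and> C \<noteq> {} \<and> (\<forall>I\<in>C. I \<subset> {..<k}) \<and>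
      (\<forall>I\<in>C. \<forall>J\<in>C. I \<subseteq> J \<or> J \<subseteq> I) \<and> S = (\<lambda>I. (\<lambda>i. z i + avec k I i)) ` C}"

end

theory Submission
  imports Defs "HOL-Combinatorics.Permutations"
begin


lemma ep_single: "edge_path F [x] \<longleftrightarrow> {x} \<in> F"
  unfolding edge_path_def by auto

lemma ep_cons2: "edge_path F (x#y#p) \<longleftrightarrow> {x} \<in> F \<and> {x,y} \<in> F \<and> edge_path F (y#p)"
proof
  assume A: "edge_path F (x#y#p)"
  have "{x,y} \<in> F" using A unfolding edge_path_def by (metis Suc_less_eq length_Cons nth_Cons_0 nth_Cons_Suc zero_less_Suc)
  moreover have "edge_path F (y#p)" unfolding edge_path_def
  proof (intro conjI allI impI)
    fix i assume "Suc i < length (y#p)"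
    then have "Suc (Suc i) < length (x#y#p)" by simp
    then have "{(x#y#p) ! Suc i, (x#y#p) ! Suc (Suc i)} \<in> F" using A unfolding edge_path_def by blast
    then show "{(y#p) ! i, (y#p) ! Suc i} \<in> F" by simp
  qed (use A in \<open>auto simp: edge_path_def\<close>)
  ultimately show "{x} \<in> F \<and> {x,y} \<in> F \<and> edge_path F (y#p)" using A unfolding edge_path_def by auto
next
  assume B: "{x} \<in> F \<and> {x,y} \<in> F \<and> edge_path F (y#p)"
  show "edge_path F (x#y#p)" unfolding edge_path_def
  proof (intro conjI allI impI)
    fix i assume i: "Suc i < length (x#y#p)"
    show "{(x#y#p) ! i, (x#y#p) ! Suc i} \<in> F"
    proof (cases i)
      case 0 then show ?thesis using B by simp
    next
      case (Suc j)
      then have "Suc j < length (y#p)" using i by simp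
      then show ?thesis using B Suc unfolding edge_path_def by simp
    qed
  qed (use B in \<open>auto simp: edge_path_def\<close>)
qed

lemma ep_Cons: "p \<noteq> [] \<Longrightarrow> edge_path F (x#p) \<longleftrightarrow> {x} \<in> F \<and> {x, hd p} \<in> F \<and> edge_path F p"
  by (cases p) (auto simp: ep_cons2)

lemma ep_append: "xs \<noteq> [] \<Longrightarrow> ys \<noteq> [] \<Longrightarrow>
   edge_path F (xs @ ys) \<longleftrightarrow> edge_path F xs \<and> edge_path F ys \<and> {last xs, hd ys} \<in> F"
proof (induction xs)
  case Nil then show ?case by simp
next
  case (Cons a xs)
  show ?case
  proof (cases "xs = []")
    case True then show ?thesis using Cons.prems by (auto simp: ep_Cons ep_single)
  next
    case False
    have "edge_path F ((a#xs) @ ys) = edge_path F (a # (xs @ ys))" by simp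
    also have "\<dots> \<longleftrightarrow> {a} \<in> F \<and> {a, hd xs} \<in> F \<and> edge_path F (xs @ ys)"
      using False by (simp add: ep_Cons)
    also have "\<dots> \<longleftrightarrow> edge_path F (a#xs) \<and> edge_path F ys \<and> {last (a#xs), hd ys} \<in> F"
      using Cons False by (auto simp: ep_Cons)
    finally show ?thesis .
  qed
qed

lemma ep_ne: "edge_path F p \<Longrightarrow> p \<noteq> []" by (simp add: edge_path_def)

lemma ep_rev: "edge_path F p \<Longrightarrow> edge_path F (rev p)"
proof (induction p)
  case Nil then show ?case by (simp add: edge_path_def)
next
  case (Cons a p)
  show ?case
  proof (cases "p = []")
    case True then show ?thesis using Cons by simp
  next
    case False
    then have "{a} \<in> F" "{a, hd p} \<in> F" "edge_path F p" using Cons.prems by (auto simp: ep_Cons)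
    moreover have "{hd p, a} = {a, hd p}" by auto
    ultimately show ?thesis using False Cons.IH
      by (simp add: ep_append ep_single last_rev)
  qed
qed

definition dc :: "'v set set \<Rightarrow> bool" where
  "dc F \<longleftrightarrow> (\<forall>S\<in>F. \<forall>T. T \<subseteq> S \<longrightarrow> T \<noteq> {} \<longrightarrow> T \<in> F)"

lemma dcD: "dc F \<Longrightarrow> S \<in> F \<Longrightarrow> T \<subseteq> S \<Longrightarrow> T \<noteq> {} \<Longrightarrow> T \<in> F"
  unfolding dc_def by blast

lemma ep_subset: "dc F \<Longrightarrow> S \<in> F \<Longrightarrow> set p \<subseteq> S \<Longrightarrow> p \<noteq> [] \<Longrightarrow> edge_path F p"
  unfolding edge_path_def
  by (auto intro: dcD simp: subset_iff)

lemma er_props: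
  assumes "(a,b) \<in> elem_red F" "dc F"
  shows "edge_path F a \<and> edge_path F b \<and> hd b = hd a \<and> last b = last a"
proof -
  obtain xs v ys where a: "a = xs @ v # ys" and b: "b = xs @ ys" and ep: "edge_path F (xs @ v # ys)"
    and xs: "xs \<noteq> []" and c: "v = last xs \<or> (ys \<noteq> [] \<and> {last xs, v, hd ys} \<in> F)"
    using assms(1) unfolding elem_red_def by blast
  have e1: "edge_path F xs" "edge_path F (v#ys)" "{last xs, v} \<in> F"
    using ep xs by (auto simp: ep_append simp del: append_Cons)
  have "edge_path F b"
  proof (cases "ys = []")
    case True then show ?thesis using b e1 by simp
  next
    case False
    have "edge_path F ys" "{v, hd ys} \<in> F" using e1(2) False by (auto simp: ep_Cons)
    moreover have "{last xs, hd ys} \<in> F"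
    proof (cases "v = last xs")
      case True then show ?thesis using \<open>{v, hd ys} \<in> F\<close> by simp
    next
      case False
      then have "{last xs, v, hd ys} \<in> F" using c by blast
      then show ?thesis by (rule dcD[OF assms(2)]) auto
    qed
    ultimately show ?thesis using b e1 False xs by (simp add: ep_append)
  qed
  moreover have "last b = last a" using a b c xs by (cases "ys = []") auto
  ultimately show ?thesis using a b ep xs by simp
qed

lemma er_context:
  assumes "(a,b) \<in> elem_red F" "edge_path F (r @ a @ s)"
  shows "(r @ a @ s, r @ b @ s) \<in> elem_red F"
proof -
  obtain xs v ys where a: "a = xs @ v # ys" and b: "b = xs @ ys"
    and xs: "xs \<noteq> []" and c: "v = last xs \<or> (ys \<noteq> [] \<and> {last xs, v, hd ys} \<in> F)"
    using assms(1) unfolding elem_red_def by blast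
  have "r @ a @ s = (r @ xs) @ v # (ys @ s)" "r @ b @ s = (r @ xs) @ (ys @ s)" using a b by auto
  moreover have "v = last (r@xs) \<or> (ys @ s \<noteq> [] \<and> {last (r@xs), v, hd (ys@s)} \<in> F)"
    using c xs by auto
  ultimately show ?thesis using assms(2) xs unfolding elem_red_def by fastforce
qed

lemma er_intro: "edge_path F (xs @ v # ys) \<Longrightarrow> xs \<noteq> [] \<Longrightarrow>
   v = last xs \<or> (ys \<noteq> [] \<and> {last xs, v, hd ys} \<in> F) \<Longrightarrow> (xs @ v # ys, xs @ ys) \<in> elem_red F"
  unfolding elem_red_def by blast

lemma htp_refl: "(p,p) \<in> comb_htp F" unfolding comb_htp_def by simp

lemma htp_trans: "(p,q) \<in> comb_htp F \<Longrightarrow> (q,r) \<in> comb_htp F \<Longrightarrow> (p,r) \<in> comb_htp F"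
  unfolding comb_htp_def by (rule rtrancl_trans)

lemma htp_sym: "(p,q) \<in> comb_htp F \<Longrightarrow> (q,p) \<in> comb_htp F"
proof -
  assume "(p,q) \<in> comb_htp F"
  then have "(q,p) \<in> ((elem_red F \<union> (elem_red F)\<inverse>)\<inverse>)\<^sup>*"
    unfolding comb_htp_def by (rule rtrancl_converseI)
  moreover have "(elem_red F \<union> (elem_red F)\<inverse>)\<inverse> = elem_red F \<union> (elem_red F)\<inverse>" by auto
  ultimately show ?thesis unfolding comb_htp_def by simp
qed

lemma htp_er: "(p,q) \<in> elem_red F \<Longrightarrow> (p,q) \<in> comb_htp F"
  unfolding comb_htp_def by auto

lemma htp_props:
  assumes "(p,q) \<in> comb_htp F" "dc F" "edge_path F p"
  shows "edge_path F q \<and> hd q = hd p \<and> last q = last p"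
  using assms(1) unfolding comb_htp_def
proof (induction rule: rtrancl_induct)
  case base then show ?case using assms by simp
next
  case (step y z)
  then show ?case using er_props[OF _ assms(2), of y z] er_props[OF _ assms(2), of z y] by auto
qed

lemma ep_replace:
  assumes "edge_path F (r @ p @ s)" "p \<noteq> []" "edge_path F m" "hd m = hd p" "last m = last p"
  shows "edge_path F (r @ m @ s)"
proof -
  have m: "m \<noteq> []" using assms(3) by (rule ep_ne)
  have ps: "edge_path F (p @ s)" "r = [] \<or> (edge_path F r \<and> {last r, hd p} \<in> F)"
    using assms(1,2) by (cases "r = []"; auto simp: ep_append)+
  have "s = [] \<or> (edge_path F s \<and> {last p, hd s} \<in> F)"
    using ps(1) assms(2) by (cases "s = []"; auto simp: ep_append)
  then have ms: "edge_path F (m @ s)" using assms m by (cases "s = []"; auto simp: ep_append)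
  show ?thesis using ps(2) ms m assms by (cases "r = []"; auto simp: ep_append)
qed

lemma htp_context:
  assumes "(p,q) \<in> comb_htp F" "dc F" "edge_path F (r @ p @ s)" "p \<noteq> []"
  shows "(r @ p @ s, r @ q @ s) \<in> comb_htp F"
proof -
  have epp: "edge_path F p"
  proof -
    have "edge_path F (p @ s)" using assms(3,4) by (cases "r = []"; auto simp: ep_append)
    then show ?thesis using assms(4) by (cases "s = []"; auto simp: ep_append)
  qed
  have "(r @ p @ s, r @ q @ s) \<in> comb_htp F \<and> edge_path F q \<and> hd q = hd p \<and> last q = last p"
    using assms(1) unfolding comb_htp_def
  proof (induction rule: rtrancl_induct)
    case base then show ?case using epp by simp
  next
    case (step y z)
    then have IH: "(r @ p @ s, r @ y @ s) \<in> comb_htp F" "edge_path F y" "hd y = hd p" "last y = last p"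
      unfolding comb_htp_def by auto
    have epy: "edge_path F (r @ y @ s)" using ep_replace[OF assms(3,4) IH(2-4)] .
    show ?case
    proof (cases "(y,z) \<in> elem_red F")
      case True
      have "(r @ y @ s, r @ z @ s) \<in> elem_red F" by (rule er_context[OF True epy])
      then have "(r @ p @ s, r @ z @ s) \<in> comb_htp F" using IH(1) htp_trans htp_er by blast
      then show ?thesis using IH er_props[OF True assms(2)] by (simp add: comb_htp_def)
    next
      case False
      then have zy: "(z,y) \<in> elem_red F" using step by auto
      have pz: "edge_path F z" "hd z = hd p" "last z = last p" using er_props[OF zy assms(2)] IH by auto
      have "edge_path F (r @ z @ s)" using ep_replace[OF assms(3,4) pz] .
      then have "(r @ z @ s, r @ y @ s) \<in> elem_red F" by (rule er_context[OF zy])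
      then have "(r @ y @ s, r @ z @ s) \<in> comb_htp F" using htp_er htp_sym by blast
      then have "(r @ p @ s, r @ z @ s) \<in> comb_htp F" using IH(1) htp_trans by blast
      then show ?thesis using pz by (simp add: comb_htp_def)
    qed
  qed
  then show ?thesis by simp
qed

lemma simplex_htp_aux:
  assumes "dc F" "S \<in> F"
  shows "set (u#v#rest) \<subseteq> S \<Longrightarrow> (u#v#rest, [u, last (v#rest)]) \<in> comb_htp F"
proof (induction rest arbitrary: v)
  case Nil then show ?case by (simp add: htp_refl)
next
  case (Cons w rest)
  have "edge_path F (u#v#w#rest)" using ep_subset[OF assms] Cons.prems by blast
  moreover have "{u,v,w} \<in> F" using dcD[OF assms] Cons.prems by auto
  ultimately have "([u] @ v # (w#rest), [u] @ (w#rest)) \<in> elem_red F"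
    by (intro er_intro) auto
  then have "(u#v#w#rest, u#w#rest) \<in> comb_htp F" by (simp add: htp_er)
  moreover have "(u#w#rest, [u, last (w#rest)]) \<in> comb_htp F" using Cons by auto
  ultimately show ?case using htp_trans by (metis last_ConsR list.distinct(1))
qed

lemma simplex_htp:
  assumes "dc F" "S \<in> F" "set p \<subseteq> S" "2 \<le> length p"
  shows "(p, [hd p, last p]) \<in> comb_htp F"
proof -
  obtain u v rest where "p = u#v#rest" using assms(4) by (cases p; cases "tl p") auto
  then show ?thesis using simplex_htp_aux[OF assms(1,2), of u v rest] assms(3) by simp
qed

lemma simplex_htp2:
  assumes "dc F" "S1 \<in> F" "set p \<subseteq> S1" "2 \<le> length p" "S2 \<in> F" "set q \<subseteq> S2" "2 \<le> length q"
    "hd p = hd q" "last p = last q"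
  shows "(p, q) \<in> comb_htp F"
  using simplex_htp[OF assms(1-4)] simplex_htp[OF assms(1,5-7)] assms(8,9) htp_sym htp_trans by metis

lemma dup_htp: "{u} \<in> F \<Longrightarrow> ([u,u], [u]) \<in> comb_htp F"
proof -
  assume "{u} \<in> F"
  then have "([u] @ u # [], [u] @ []) \<in> elem_red F"
    by (intro er_intro) (auto simp: ep_cons2 ep_single)
  then show ?thesis by (simp add: htp_er)
qed



definition Ps :: "(nat\<Rightarrow>int) \<Rightarrow> (nat\<Rightarrow>nat) \<Rightarrow> nat \<Rightarrow> int" where
  "Ps l \<sigma> t = (\<Sum>j<t. l (\<sigma> j))"
definition Av :: "nat \<Rightarrow> (nat\<Rightarrow>nat) \<Rightarrow> nat \<Rightarrow> nat \<Rightarrow> int" where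
  "Av k \<sigma> t = avec k (\<sigma> ` {..<t})"
definition Iab :: "nat \<Rightarrow> (nat\<Rightarrow>nat) \<Rightarrow> nat \<Rightarrow> nat \<Rightarrow> nat set" where
  "Iab k \<sigma> a b = (if a < b then \<sigma> ` {a..<b} else \<sigma> ` ({a..<k} \<union> {..<b}))"

lemma avec_union: "finite X \<Longrightarrow> finite Y \<Longrightarrow> X \<inter> Y = {} \<Longrightarrow> avec k (X \<union> Y) i = avec k X i + avec k Y i"
  unfolding avec_def by (auto simp: card_Un_disjoint)

lemma avec_full: "avec k {..<k} i = 0"
  unfolding avec_def by auto

lemma avec_mod: "i < k \<Longrightarrow> avec k I i mod int k = (- int (card I)) mod int k"
proof -
  assume "i < k"
  then have "avec k I i = (if i \<in> I then int k else 0) + (- int (card I))" unfolding avec_def by simp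
  then show ?thesis by (cases "i \<in> I") (simp_all add: mod_add_self1)
qed

lemma avec_in_Lambda: assumes "I \<subseteq> {..<k}" shows "avec k I \<in> Lambda k"
proof -
  have fin: "finite I" using assms finite_subset by blast
  have "(\<Sum>i<k. avec k I i) = (\<Sum>i<k. (if i \<in> I then int k else 0)) - (\<Sum>i<k. int (card I))"
    unfolding avec_def by (simp add: sum_subtractf)
  also have "(\<Sum>i<k. (if i \<in> I then int k else 0)) = int k * int (card I)"
    using assms by (simp add: sum.If_cases Int_absorb1)
  finally have "(\<Sum>i<k. avec k I i) = 0" by simp
  moreover have "\<forall>i<k. \<forall>j<k. avec k I i mod int k = avec k I j mod int k"
    by (metis avec_mod)
  moreover have "\<forall>i\<ge>k. avec k I i = 0" unfolding avec_def by simp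
  ultimately show ?thesis unfolding Lambda_def by blast
qed

lemma Lambda_diff: assumes "x \<in> Lambda k" "y \<in> Lambda k" shows "(\<lambda>i. x i - y i) \<in> Lambda k"
proof -
  have "(\<Sum>i<k. x i) = 0" "(\<Sum>i<k. y i) = 0" "\<forall>i\<ge>k. x i = 0" "\<forall>i\<ge>k. y i = 0"
    using assms unfolding Lambda_def by blast+
  then have "(\<Sum>i<k. x i - y i) = 0" "\<forall>i\<ge>k. x i - y i = 0" by (simp_all add: sum_subtractf)
  moreover have "\<forall>i<k. \<forall>j<k. (x i - y i) mod int k = (x j - y j) mod int k"
  proof (intro allI impI)
    fix i j assume "i < k" "j < k"
    then have "x i mod int k = x j mod int k" "y i mod int k = y j mod int k" using assms unfolding Lambda_def by blast+
    then show "(x i - y i) mod int k = (x j - y j) mod int k" by (metis mod_diff_eq)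
  qed
  ultimately show ?thesis unfolding Lambda_def by blast
qed

locale tz =
  fixes k :: nat and l :: "nat \<Rightarrow> int" and n :: int
  assumes k2: "k \<ge> 2" and lpos: "\<forall>i<k. l i > 0" and gen: "generic k l" and nsum: "n = (\<Sum>i<k. l i)"
begin

abbreviation "F \<equiv> tonnetz n k l"
abbreviation "H \<equiv> comb_htp F"

lemma sum_bounds: assumes "I \<subseteq> {..<k}" "I \<noteq> {}" shows "0 < sum l I" "sum l I \<le> n"
proof -
  have fin: "finite I" using assms finite_subset by blast
  obtain i where i: "i \<in> I" using assms by blast
  have nn: "\<forall>j\<in>{..<k}. 0 \<le> l j" using lpos by auto
  have "l i \<le> sum l I" using i fin nn assms by (intro member_le_sum) auto
  then show "0 < sum l I" using lpos i assms by force
  show "sum l I \<le> n" unfolding nsum using nn assms by (intro sum_mono2) auto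
qed

lemma n_pos: "n > 0"
proof -
  have "{..<k} \<noteq> {}" using k2 by (metis lessThan_iff not_numeral_le_zero le_zero_eq ex_in_conv neq0_conv)
  then show ?thesis using sum_bounds(1)[of "{..<k}"] nsum by simp
qed

lemma mod_inj: assumes "0 < a" "a \<le> n" "0 < b" "b \<le> n" "a mod n = b mod n" shows "a = b"
proof -
  have "n dvd a - b" using assms(5) by (simp add: mod_eq_dvd_iff)
  then obtain t where t: "a - b = n * t" by blast
  have "\<bar>a - b\<bar> < n" using assms by auto
  then have "\<bar>n * t\<bar> < n" using t by simp
  then have "t = 0" using n_pos by (auto simp: abs_mult)
  then show ?thesis using t by simp
qed

lemma LT: assumes "I \<noteq> {}" "I \<subseteq> {..<k}" "(v - u) mod n = sum l I mod n"
  shows "ltype n k l u v = I"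
  unfolding ltype_def
proof (rule the_equality)
  show "I \<noteq> {} \<and> I \<subseteq> {..<k} \<and> (v - u) mod n = sum l I mod n" by (intro conjI assms)
next
  fix J assume J: "J \<noteq> {} \<and> J \<subseteq> {..<k} \<and> (v - u) mod n = sum l J mod n"
  then have J1: "J \<noteq> {}" "J \<subseteq> {..<k}" "(v - u) mod n = sum l J mod n" by blast+
  have e: "sum l J mod n = sum l I mod n" using J1(3) assms(3) by (rule trans[OF sym])
  have "sum l J = sum l I"
    by (rule mod_inj[OF sum_bounds(1)[OF J1(2,1)] sum_bounds(2)[OF J1(2,1)] sum_bounds(1)[OF assms(2,1)] sum_bounds(2)[OF assms(2,1)] e])
  then show "J = I" using gen J1(2) assms(2) unfolding generic_def by blast
qed

lemma k_ne: "{..<k} \<noteq> {}"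
  using k2 by (metis lessThan_iff not_numeral_le_zero le_zero_eq ex_in_conv neq0_conv)

lemma ltype_refl: "ltype n k l u u = {..<k}"
proof (rule LT[OF k_ne])
  show "(u - u) mod n = sum l {..<k} mod n" using nsum by simp
qed simp

lemma omega_refl: "omega_edge n k l u u i = 0"
  unfolding omega_edge_def ltype_refl by (rule avec_full)

lemma dcF: "dc F"
  unfolding dc_def tonnetz_def by blast

lemma tms_range: "x' \<in> tonn_max_simplex n k l x \<sigma> \<Longrightarrow> x' \<in> {0..<n}"
  unfolding tonn_max_simplex_def using n_pos by auto

lemma single_F: "{x} \<in> F \<longleftrightarrow> x \<in> {0..<n}"
proof
  assume "{x} \<in> F" then show "x \<in> {0..<n}" unfolding tonnetz_def using tms_range by blast
next
  assume x: "x \<in> {0..<n}"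
  have "x \<in> tonn_max_simplex n k l x id" unfolding tonn_max_simplex_def
    using x k2 by (auto intro!: exI[of _ 0])
  then show "{x} \<in> F" unfolding tonnetz_def using x permutes_id by blast
qed

lemma ep_range: "edge_path F p \<Longrightarrow> set p \<subseteq> {0..<n}"
  unfolding edge_path_def using single_F by blast

lemma P_k: "\<sigma> permutes {..<k} \<Longrightarrow> Ps l \<sigma> k = n"
  unfolding Ps_def nsum using sum.permute[of \<sigma> "{..<k}" l] by (simp add: comp_def)

lemma tms_mem: assumes "x \<in> {0..<n}" "\<sigma> permutes {..<k}" "t \<le> k"
  shows "(x + Ps l \<sigma> t) mod n \<in> tonn_max_simplex n k l x \<sigma>"
proof (cases "t < k")
  case True then show ?thesis unfolding tonn_max_simplex_def Ps_def by blast
next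
  case False
  then have "t = k" using assms by simp
  then have "(x + Ps l \<sigma> t) mod n = (x + Ps l \<sigma> 0) mod n"
    using P_k[OF assms(2)] by (simp add: Ps_def)
  then show ?thesis unfolding tonn_max_simplex_def Ps_def using k2
    by (auto intro!: exI[of _ 0])
qed

lemma tms_F: "x \<in> {0..<n} \<Longrightarrow> \<sigma> permutes {..<k} \<Longrightarrow> T \<subseteq> tonn_max_simplex n k l x \<sigma> \<Longrightarrow> T \<noteq> {} \<Longrightarrow> T \<in> F"
  unfolding tonnetz_def by blast

lemma face_pos: assumes "S \<in> F"
  shows "\<exists>x \<sigma>. x \<in> {0..<n} \<and> \<sigma> permutes {..<k} \<and> (\<forall>u\<in>S. \<exists>a<k. u = (x + Ps l \<sigma> a) mod n)"
  using assms unfolding tonnetz_def tonn_max_simplex_def Ps_def by blast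

lemma sum_img: "\<sigma> permutes {..<k} \<Longrightarrow> A \<subseteq> {..<k} \<Longrightarrow> sum l (\<sigma> ` A) = (\<Sum>j\<in>A. l (\<sigma> j))"
  by (subst sum.reindex) (auto intro: inj_on_subset[OF permutes_inj_on])

lemma Iab_props: assumes "\<sigma> permutes {..<k}" "a < k" "b < k"
  shows "Iab k \<sigma> a b \<noteq> {}" "Iab k \<sigma> a b \<subseteq> {..<k}"
    "sum l (Iab k \<sigma> a b) mod n = (Ps l \<sigma> b - Ps l \<sigma> a) mod n"
    "avec k (Iab k \<sigma> a b) i = Av k \<sigma> b i - Av k \<sigma> a i"
proof -
  have img: "\<sigma> ` {..<k} = {..<k}" using assms(1) by (rule permutes_image)
  have inj: "inj_on \<sigma> X" for X using permutes_inj_on[OF assms(1)] by (rule inj_on_subset) auto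
  show "Iab k \<sigma> a b \<noteq> {}" using assms unfolding Iab_def by auto
  show "Iab k \<sigma> a b \<subseteq> {..<k}" using assms img unfolding Iab_def by auto
  show "sum l (Iab k \<sigma> a b) mod n = (Ps l \<sigma> b - Ps l \<sigma> a) mod n"
  proof (cases "a < b")
    case True
    have "{..<b} = {..<a} \<union> {a..<b}" using True by auto
    then have "Ps l \<sigma> b = Ps l \<sigma> a + (\<Sum>j\<in>{a..<b}. l (\<sigma> j))" unfolding Ps_def
      by (simp add: sum.union_disjoint ivl_disj_int)
    moreover have "sum l (Iab k \<sigma> a b) = (\<Sum>j\<in>{a..<b}. l (\<sigma> j))"
    proof -
      have "{a..<b} \<subseteq> {..<k}" using assms(3) by auto
      then show ?thesis unfolding Iab_def using True sum_img[OF assms(1), of "{a..<b}"] by simp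
    qed
    ultimately show ?thesis by simp
  next
    case False
    have "{..<k} = {..<a} \<union> {a..<k}" using assms by auto
    then have "Ps l \<sigma> k = Ps l \<sigma> a + (\<Sum>j\<in>{a..<k}. l (\<sigma> j))" unfolding Ps_def
      by (simp add: sum.union_disjoint ivl_disj_int)
    then have e1: "(\<Sum>j\<in>{a..<k}. l (\<sigma> j)) = n - Ps l \<sigma> a" using P_k[OF assms(1)] by simp
    have "sum l (Iab k \<sigma> a b) = (\<Sum>j\<in>{a..<k} \<union> {..<b}. l (\<sigma> j))"
    proof -
      have "{a..<k} \<union> {..<b} \<subseteq> {..<k}" using assms(3) by auto
      then show ?thesis unfolding Iab_def using False sum_img[OF assms(1), of "{a..<k} \<union> {..<b}"] by simp
    qed
    also have "\<dots> = (\<Sum>j\<in>{a..<k}. l (\<sigma> j)) + Ps l \<sigma> b" unfolding Ps_def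
      using False by (subst sum.union_disjoint) auto
    finally have "sum l (Iab k \<sigma> a b) = n + (Ps l \<sigma> b - Ps l \<sigma> a)" using e1 by simp
    then show ?thesis by simp
  qed
  show "avec k (Iab k \<sigma> a b) i = Av k \<sigma> b i - Av k \<sigma> a i"
  proof (cases "a < b")
    case True
    have "{..<b} = {..<a} \<union> {a..<b}" using True by auto
    then have "\<sigma> ` {..<b} = \<sigma> ` {..<a} \<union> \<sigma> ` {a..<b}" by (metis image_Un)
    moreover have "\<sigma> ` {..<a} \<inter> \<sigma> ` {a..<b} = {}"
      using inj_on_image_Int[OF inj[of UNIV], of "{..<a}" "{a..<b}"] by (simp add: Int_commute[of "{..<a}"] ivl_disj_int)
    ultimately have "Av k \<sigma> b i = Av k \<sigma> a i + avec k (\<sigma> ` {a..<b}) i" unfolding Av_def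
      by (simp add: avec_union)
    then show ?thesis unfolding Iab_def using True by simp
  next
    case False
    have "{..<k} = {..<a} \<union> {a..<k}" using assms by auto
    then have "{..<k} = \<sigma> ` {..<a} \<union> \<sigma> ` {a..<k}" using img by (metis image_Un)
    moreover have "\<sigma> ` {..<a} \<inter> \<sigma> ` {a..<k} = {}"
      using inj_on_image_Int[OF inj[of UNIV], of "{..<a}" "{a..<k}"] by (simp add: ivl_disj_int)
    ultimately have e1: "0 = Av k \<sigma> a i + avec k (\<sigma> ` {a..<k}) i" unfolding Av_def
      by (metis avec_full avec_union finite_imageI finite_lessThan finite_atLeastLessThan)
    have "\<sigma> ` ({a..<k} \<union> {..<b}) = \<sigma> ` {a..<k} \<union> \<sigma> ` {..<b}" by auto
    moreover have "{a..<k} \<inter> {..<b} = {}" using False by auto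
    then have "\<sigma> ` {a..<k} \<inter> \<sigma> ` {..<b} = {}"
      using inj_on_image_Int[OF inj[of UNIV], of "{a..<k}" "{..<b}"] by simp
    ultimately have "avec k (Iab k \<sigma> a b) i = avec k (\<sigma> ` {a..<k}) i + Av k \<sigma> b i"
      unfolding Iab_def Av_def using False by (simp add: avec_union)
    then show ?thesis using e1 by simp
  qed
qed

lemma edge_pos: assumes "x \<in> {0..<n}" "\<sigma> permutes {..<k}" "a < k" "b < k"
  shows "ltype n k l ((x + Ps l \<sigma> a) mod n) ((x + Ps l \<sigma> b) mod n) = Iab k \<sigma> a b"
    "omega_edge n k l ((x + Ps l \<sigma> a) mod n) ((x + Ps l \<sigma> b) mod n) i = Av k \<sigma> b i - Av k \<sigma> a i"
proof -
  have "((x + Ps l \<sigma> b) mod n - (x + Ps l \<sigma> a) mod n) mod n = (Ps l \<sigma> b - Ps l \<sigma> a) mod n"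
    by (metis add_diff_cancel_left mod_diff_eq)
  then show lt: "ltype n k l ((x + Ps l \<sigma> a) mod n) ((x + Ps l \<sigma> b) mod n) = Iab k \<sigma> a b"
    using Iab_props[OF assms(2-4)] by (intro LT) auto
  show "omega_edge n k l ((x + Ps l \<sigma> a) mod n) ((x + Ps l \<sigma> b) mod n) i = Av k \<sigma> b i - Av k \<sigma> a i"
    unfolding omega_edge_def lt using Iab_props[OF assms(2-4)] by simp
qed

lemma omega_tri: assumes "{u,v,w} \<in> F"
  shows "omega_edge n k l u v i + omega_edge n k l v w i = omega_edge n k l u w i"
proof -
  obtain x \<sigma> where x: "x \<in> {0..<n}" "\<sigma> permutes {..<k}" and
    P: "\<forall>y\<in>{u,v,w}. \<exists>a<k. y = (x + Ps l \<sigma> a) mod n" using face_pos[OF assms] by blast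
  obtain a b c where "a<k" "b<k" "c<k" "u = (x + Ps l \<sigma> a) mod n" "v = (x + Ps l \<sigma> b) mod n"
    "w = (x + Ps l \<sigma> c) mod n" using P by blast
  then show ?thesis using edge_pos(2)[OF x] by simp
qed

lemma omega_anti: assumes "{u,v} \<in> F"
  shows "omega_edge n k l v u i = - omega_edge n k l u v i"
  using omega_tri[of u v u i] assms omega_refl by (simp add: insert_commute)

lemma edge_type: assumes "{u,v} \<in> F"
  shows "\<exists>I. I \<noteq> {} \<and> I \<subseteq> {..<k} \<and> ltype n k l u v = I \<and> v = (u + sum l I) mod n"
proof -
  obtain x \<sigma> where x: "x \<in> {0..<n}" "\<sigma> permutes {..<k}" and
    P: "\<forall>y\<in>{u,v}. \<exists>a<k. y = (x + Ps l \<sigma> a) mod n" using face_pos[OF assms] by blast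
  obtain a b where ab: "a<k" "b<k" "u = (x + Ps l \<sigma> a) mod n" "v = (x + Ps l \<sigma> b) mod n"
    using P by blast
  have "(u + sum l (Iab k \<sigma> a b)) mod n = (u + (Ps l \<sigma> b - Ps l \<sigma> a)) mod n"
    using Iab_props(3)[OF x(2) ab(1,2)] by (metis mod_add_right_eq)
  also have "\<dots> = v" using ab by (simp add: mod_add_left_eq)
  finally show ?thesis using Iab_props[OF x(2) ab(1,2)] edge_pos(1)[OF x ab(1,2)] ab by auto
qed

end


lemma op_single: "omega_path n k l [x] i = 0"
  unfolding omega_path_def by simp

lemma op_cons: "omega_path n k l (x#y#p) i = omega_edge n k l x y i + omega_path n k l (y#p) i"
  unfolding omega_path_def by (simp add: sum.lessThan_Suc_shift del: sum.lessThan_Suc)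

lemma op_append: "p \<noteq> [] \<Longrightarrow> q \<noteq> [] \<Longrightarrow>
  omega_path n k l (p @ q) i = omega_path n k l p i + omega_edge n k l (last p) (hd q) i + omega_path n k l q i"
proof (induction p)
  case Nil then show ?case by simp
next
  case (Cons a p)
  show ?case
  proof (cases "p = []")
    case True
    then show ?thesis using Cons.prems by (cases q) (simp_all add: op_cons op_single)
  next
    case False
    then obtain b p' where "p = b # p'" by (cases p) auto
    then show ?thesis using Cons False by (simp add: op_cons)
  qed
qed

lemma op_glue: "p \<noteq> [] \<Longrightarrow> q \<noteq> [] \<Longrightarrow> last p = hd q \<Longrightarrow>
  omega_path n k l (p @ tl q) i = omega_path n k l p i + omega_path n k l q i"
proof -
  assume a: "p \<noteq> []" "q \<noteq> []" "last p = hd q"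
  obtain y q' where q: "q = y # q'" using a(2) by (cases q) auto
  show ?thesis
  proof (cases "q' = []")
    case True then show ?thesis using q by (simp add: op_single)
  next
    case False
    have "omega_path n k l q i = omega_edge n k l y (hd q') i + omega_path n k l q' i"
      using q False by (cases q') (simp_all add: op_cons)
    then show ?thesis using op_append[OF a(1) False] q a(3) by simp
  qed
qed

fun walk :: "int \<Rightarrow> (nat\<Rightarrow>int) \<Rightarrow> int \<Rightarrow> nat list \<Rightarrow> int list" where
  "walk n l y [] = [y]"
| "walk n l y (i#w) = y # walk n l ((y + l i) mod n) w"

fun wend :: "int \<Rightarrow> (nat\<Rightarrow>int) \<Rightarrow> int \<Rightarrow> nat list \<Rightarrow> int" where
  "wend n l y [] = y"
| "wend n l y (i#w) = wend n l ((y + l i) mod n) w"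

lemma walk_ne: "walk n l y w \<noteq> []" by (cases w) auto
lemma walk_hd: "hd (walk n l y w) = y" by (cases w) auto
lemma walk_last: "last (walk n l y w) = wend n l y w"
  by (induction w arbitrary: y) (auto simp: walk_ne)
lemma walk_length: "length (walk n l y w) = Suc (length w)"
  by (induction w arbitrary: y) auto
lemma wend_append: "wend n l y (u @ w) = wend n l (wend n l y u) w"
  by (induction u arbitrary: y) auto
lemma walk_append: "walk n l y (u @ w) = walk n l y u @ tl (walk n l (wend n l y u) w)"
proof (induction u arbitrary: y)
  case Nil then show ?case by (cases w) auto
next
  case (Cons a u) then show ?case by simp
qed
lemma walk_append2: "walk n l y (u @ w) = butlast (walk n l y u) @ walk n l (wend n l y u) w"
proof -
  have "walk n l y u = butlast (walk n l y u) @ [wend n l y u]"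
    using walk_last[of n l y u] walk_ne[of n l y u] by (metis append_butlast_last_id)
  moreover have "walk n l (wend n l y u) w = wend n l y u # tl (walk n l (wend n l y u) w)"
    using walk_hd walk_ne by (metis list.collapse)
  ultimately show ?thesis using walk_append[of n l y u w] by (metis append.assoc append_Cons append_Nil)
qed

context tz begin

lemma er_omega: assumes "(a,b) \<in> elem_red F" shows "omega_path n k l a i = omega_path n k l b i"
proof -
  obtain xs v ys where a: "a = xs @ v # ys" and b: "b = xs @ ys"
    and xs: "xs \<noteq> []" and c: "v = last xs \<or> (ys \<noteq> [] \<and> {last xs, v, hd ys} \<in> F)"
    using assms unfolding elem_red_def by blast
  have oa: "omega_path n k l a i = omega_path n k l xs i + omega_edge n k l (last xs) v i + omega_path n k l (v#ys) i"
    using a xs op_append[of xs "v#ys"] by simp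
  show ?thesis
  proof (cases "ys = []")
    case True
    then have "v = last xs" using c by blast
    then show ?thesis using oa True a b by (simp add: omega_refl op_single)
  next
    case False
    have ov: "omega_path n k l (v#ys) i = omega_edge n k l v (hd ys) i + omega_path n k l ys i"
      using False by (cases ys) (simp_all add: op_cons)
    have ob: "omega_path n k l b i = omega_path n k l xs i + omega_edge n k l (last xs) (hd ys) i + omega_path n k l ys i"
      using b xs False op_append by simp
    have "omega_edge n k l (last xs) v i + omega_edge n k l v (hd ys) i = omega_edge n k l (last xs) (hd ys) i"
    proof (cases "v = last xs")
      case True then show ?thesis by (simp add: omega_refl)
    next
      case False then show ?thesis using c omega_tri by blast
    qed
    then show ?thesis using oa ov ob by simp
  qed
qed

lemma htp_omega: assumes "(p,q) \<in> H" shows "omega_path n k l p i = omega_path n k l q i"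
  using assms unfolding comb_htp_def
proof (induction rule: rtrancl_induct)
  case base then show ?case by simp
next
  case (step y z)
  then show ?case using er_omega[of y z i] er_omega[of z y i] by auto
qed

lemma op_rev: "edge_path F p \<Longrightarrow> omega_path n k l (rev p) i = - omega_path n k l p i"
proof (induction p)
  case Nil then show ?case by (simp add: edge_path_def)
next
  case (Cons a p)
  show ?case
  proof (cases "p = []")
    case True then show ?thesis by (simp add: op_single)
  next
    case False
    then have e: "{a, hd p} \<in> F" "edge_path F p" using Cons.prems by (auto simp: ep_Cons)
    have "omega_path n k l (rev (a#p)) i = omega_path n k l (rev p) i + omega_edge n k l (hd p) a i + omega_path n k l [a] i"
      using op_append[of "rev p" "[a]"] False by (simp add: last_rev)
    also have "\<dots> = - omega_path n k l p i - omega_edge n k l a (hd p) i"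
      using Cons.IH[OF e(2)] omega_anti[OF e(1)] by (simp add: op_single)
    also have "\<dots> = - omega_path n k l (a#p) i"
      using False by (cases p) (simp_all add: op_cons)
    finally show ?thesis .
  qed
qed

lemma wend_range: "y \<in> {0..<n} \<Longrightarrow> wend n l y w \<in> {0..<n}"
  by (induction w arbitrary: y) (auto simp: n_pos)

lemma wend_sum: "y \<in> {0..<n} \<Longrightarrow> wend n l y w = (y + sum_list (map l w)) mod n"
proof (induction w arbitrary: y)
  case Nil then show ?case by simp
next
  case (Cons i w)
  have "(y + l i) mod n \<in> {0..<n}" using n_pos by auto
  then show ?case using Cons by (simp add: mod_add_left_eq add.assoc)
qed

lemma walk_mem: "x \<in> set (walk n l y w) \<Longrightarrow> \<exists>t\<le>length w. x = wend n l y (take t w)"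
proof (induction w arbitrary: y)
  case Nil then show ?case by simp
next
  case (Cons i w)
  show ?case
  proof (cases "x = y")
    case True then show ?thesis by (intro exI[of _ 0]) simp
  next
    case False
    then have "x \<in> set (walk n l ((y + l i) mod n) w)" using Cons.prems by simp
    then obtain t where "t \<le> length w" "x = wend n l ((y + l i) mod n) (take t w)" using Cons.IH by blast
    then show ?thesis by (intro exI[of _ "Suc t"]) simp
  qed
qed

end


lemma ext_perm: assumes "distinct w" "set w \<subseteq> {..<k}"
  shows "\<exists>\<sigma>. \<sigma> permutes {..<k} \<and> (\<forall>j<length w. \<sigma> j = w!j)"
proof -
  define ws where "ws = w @ sorted_list_of_set ({..<k} - set w)"
  have d: "distinct ws" using assms by (simp add: ws_def)
  have s: "set ws = {..<k}" using assms by (auto simp: ws_def)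
  have len: "length ws = k" using distinct_card[OF d] s by simp
  define \<sigma> where "\<sigma> = (\<lambda>j. if j < k then ws!j else j)"
  have "bij_betw ((!) ws) {..<k} {..<k}" using bij_betw_nth[OF d] len s by simp
  moreover have "bij_betw \<sigma> {..<k} {..<k} = bij_betw ((!) ws) {..<k} {..<k}"
    by (rule bij_betw_cong) (simp add: \<sigma>_def)
  ultimately have "bij_betw \<sigma> {..<k} {..<k}" by simp
  then have "\<sigma> permutes {..<k}" by (rule bij_imp_permutes) (simp add: \<sigma>_def)
  moreover have "\<forall>j<length w. \<sigma> j = w!j"
    using len by (auto simp: \<sigma>_def ws_def nth_append)
  ultimately show ?thesis by blast
qed

lemma sum_take: "t \<le> length w \<Longrightarrow> sum_list (map l (take t w)) = (\<Sum>j<t. l (w!j))"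
proof (induction t)
  case 0 then show ?case by simp
next
  case (Suc t)
  then show ?case by (simp add: take_Suc_conv_app_nth)
qed

lemma count_distinct: "distinct xs \<Longrightarrow> count_list xs x = (if x \<in> set xs then 1 else 0)"
  by (induction xs) auto

lemma sum_list_concat': "sum_list (concat xss) = sum_list (map sum_list (xss :: int list list))"
  by (induction xss) auto

definition word :: "nat \<Rightarrow> (nat \<Rightarrow> nat) \<Rightarrow> nat list" where
  "word k c = concat (map (\<lambda>i. replicate (c i) i) [0..<k])"

lemma word_set: "set (word k c) \<subseteq> {..<k}"
  unfolding word_def by auto

lemma word_cong: "(\<forall>t<k. c t = d t) \<Longrightarrow> word k c = word k d"
  unfolding word_def by (intro arg_cong[where f=concat] map_cong) auto

lemma word_sum: "sum_list (map f (word k c)) = (\<Sum>i<k. of_nat (c i) * (f i :: int))"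
proof -
  have "sum_list (map f (word k c)) = sum_list (map (\<lambda>i. sum_list (map f (replicate (c i) i))) [0..<k])"
    unfolding word_def by (simp add: map_concat sum_list_concat' comp_def)
  also have "\<dots> = sum_list (map (\<lambda>i. of_nat (c i) * f i) [0..<k])"
    by (simp add: sum_list_replicate)
  also have "\<dots> = (\<Sum>i<k. of_nat (c i) * f i)"
    by (simp add: interv_sum_list_conv_sum_set_nat atLeast0LessThan)
  finally show ?thesis .
qed

definition lamv :: "nat \<Rightarrow> (nat \<Rightarrow> nat) \<Rightarrow> nat \<Rightarrow> int" where
  "lamv k c j = (if j < k then int k * int (c j) - (\<Sum>i<k. int (c i)) else 0)"

lemma word_avec: "(\<Sum>i<k. of_nat (c i) * avec k {i} j) = lamv k c j"
proof (cases "j < k")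
  case True
  have "(\<Sum>i<k. of_nat (c i) * avec k {i} j) = (\<Sum>i<k. (if i = j then int k * int (c i) else 0) - int (c i))"
    using True by (intro sum.cong) (auto simp: avec_def algebra_simps)
  also have "\<dots> = int k * int (c j) - (\<Sum>i<k. int (c i))"
    using True by (simp add: sum_subtractf)
  finally show ?thesis using True by (simp add: lamv_def)
next
  case False then show ?thesis by (simp add: lamv_def avec_def)
qed

lemma lamv_Lambda: "lamv k c \<in> Lambda k"
proof -
  have "(\<Sum>j<k. lamv k c j) = (\<Sum>j<k. int k * int (c j)) - (\<Sum>j<k. (\<Sum>i<k. int (c i)))"
    unfolding lamv_def by (simp add: sum_subtractf)
  also have "\<dots> = 0" by (simp add: sum_distrib_left)
  finally have s: "(\<Sum>j<k. lamv k c j) = 0" .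
  have m: "lamv k c j mod int k = (- (\<Sum>i<k. int (c i))) mod int k" if "j < k" for j
  proof -
    have "lamv k c j = int k * int (c j) + (- (\<Sum>i<k. int (c i)))" using that by (simp add: lamv_def)
    then show ?thesis by (metis mod_mult_self4)
  qed
  have "\<forall>j\<ge>k. lamv k c j = 0" by (simp add: lamv_def)
  then show ?thesis unfolding Lambda_def using s m by auto
qed

context tz begin

lemma walk_face: assumes "y \<in> {0..<n}" "distinct w" "set w \<subseteq> {..<k}"
  shows "\<exists>\<sigma>. \<sigma> permutes {..<k} \<and> set (walk n l y w) \<subseteq> tonn_max_simplex n k l y \<sigma>"
proof -
  obtain \<sigma> where \<sigma>: "\<sigma> permutes {..<k}" "\<forall>j<length w. \<sigma> j = w!j" using ext_perm[OF assms(2,3)] by blast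
  have lw: "length w \<le> k" using distinct_card[OF assms(2)] card_mono[OF _ assms(3)] by simp
  have "x \<in> tonn_max_simplex n k l y \<sigma>" if x: "x \<in> set (walk n l y w)" for x
  proof -
    obtain t where t: "t \<le> length w" "x = wend n l y (take t w)" using walk_mem[OF x] by blast
    have "sum_list (map l (take t w)) = Ps l \<sigma> t"
      unfolding Ps_def using sum_take[OF t(1)] \<sigma>(2) t(1) by simp
    then have "x = (y + Ps l \<sigma> t) mod n" using t(2) wend_sum[OF assms(1)] by simp
    then show ?thesis using tms_mem[OF assms(1) \<sigma>(1)] t(1) lw by simp
  qed
  then show ?thesis using \<sigma>(1) by blast
qed

lemma walk_faceF: assumes "y \<in> {0..<n}" "distinct w" "set w \<subseteq> {..<k}"
  shows "\<exists>S\<in>F. set (walk n l y w) \<subseteq> S"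
proof -
  obtain \<sigma> where \<sigma>: "\<sigma> permutes {..<k}" "set (walk n l y w) \<subseteq> tonn_max_simplex n k l y \<sigma>"
    using walk_face[OF assms] by blast
  have "tonn_max_simplex n k l y \<sigma> \<in> F"
    using tms_F[OF assms(1) \<sigma>(1) subset_refl] \<sigma>(2) walk_ne[of n l y w] by (metis set_empty subset_empty)
  then show ?thesis using \<sigma>(2) by blast
qed

lemma walk_ep: "y \<in> {0..<n} \<Longrightarrow> set w \<subseteq> {..<k} \<Longrightarrow> edge_path F (walk n l y w)"
proof (induction w arbitrary: y)
  case Nil then show ?case by (simp add: ep_single single_F)
next
  case (Cons i w)
  let ?y' = "(y + l i) mod n"
  have r: "?y' \<in> {0..<n}" using n_pos by simp
  obtain S where S: "S \<in> F" "set (walk n l y [i]) \<subseteq> S" using walk_faceF[OF Cons.prems(1), of "[i]"] Cons.prems(2) by auto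
  have "{y, ?y'} \<in> F" using dcD[OF dcF S(1)] S(2) by simp
  moreover have "edge_path F (walk n l ?y' w)" using Cons r by simp
  ultimately show ?case using Cons.prems(1) walk_ne[of n l ?y' w] walk_hd[of n l ?y' w]
    by (simp add: ep_Cons single_F)
qed

lemma walk_omega: "y \<in> {0..<n} \<Longrightarrow> set w \<subseteq> {..<k} \<Longrightarrow>
  omega_path n k l (walk n l y w) j = sum_list (map (\<lambda>i. avec k {i} j) w)"
proof (induction w arbitrary: y)
  case Nil then show ?case by (simp add: op_single)
next
  case (Cons i w)
  let ?y' = "(y + l i) mod n"
  have r: "?y' \<in> {0..<n}" using n_pos by simp
  obtain rest where rest: "walk n l ?y' w = ?y' # rest" using walk_hd[of n l ?y' w] walk_ne[of n l ?y' w]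
    by (metis list.collapse)
  have "(?y' - y) mod n = sum l {i} mod n" by (simp add: mod_diff_left_eq)
  then have "ltype n k l y ?y' = {i}" using Cons.prems by (intro LT) auto
  then have "omega_edge n k l y ?y' j = avec k {i} j" by (simp add: omega_edge_def)
  moreover have "omega_path n k l (walk n l ?y' w) j = sum_list (map (\<lambda>i. avec k {i} j) w)"
    using Cons.IH r Cons.prems(2) by simp
  ultimately show ?case using rest op_cons[of n k l y ?y' rest j] by simp
qed

lemma word_omega: "y \<in> {0..<n} \<Longrightarrow> omega_path n k l (walk n l y (word k c)) j = lamv k c j"
  using walk_omega[OF _ word_set] word_sum word_avec by simp

lemma WC: assumes "y \<in> {0..<n}" "set u \<subseteq> {..<k}" "set w \<subseteq> {..<k}" "set v \<subseteq> {..<k}"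
  "(walk n l (wend n l y u) w, walk n l (wend n l y u) w') \<in> H"
  shows "(walk n l y (u@w@v), walk n l y (u@w'@v)) \<in> H"
proof -
  let ?y' = "wend n l y u"
  have r: "?y' \<in> {0..<n}" using wend_range[OF assms(1)] .
  have "last (walk n l ?y' w') = last (walk n l ?y' w)"
    using htp_props[OF assms(5) dcF walk_ep[OF r assms(3)]] by simp
  then have we: "wend n l ?y' w' = wend n l ?y' w" by (simp add: walk_last)
  have e1: "walk n l y (u@w@v) = butlast (walk n l y u) @ walk n l ?y' w @ tl (walk n l (wend n l ?y' w) v)"
    unfolding walk_append2[of n l y u "w@v"] walk_append[of n l ?y' w v] by simp
  have e2: "walk n l y (u@w'@v) = butlast (walk n l y u) @ walk n l ?y' w' @ tl (walk n l (wend n l ?y' w) v)"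
    unfolding walk_append2[of n l y u "w'@v"] walk_append[of n l ?y' w' v] we by simp
  have "edge_path F (walk n l y (u@w@v))" using walk_ep[OF assms(1)] assms(2-4) by simp
  then show ?thesis unfolding e1 e2 by (intro htp_context[OF assms(5) dcF]) (simp_all add: walk_ne)
qed

lemma COMM: assumes "i \<noteq> j" "i < k" "j < k" "y \<in> {0..<n}" "set u \<subseteq> {..<k}" "set v \<subseteq> {..<k}"
  shows "(walk n l y (u@[j,i]@v), walk n l y (u@[i,j]@v)) \<in> H"
proof (rule WC[OF assms(4,5) _ assms(6)])
  let ?y' = "wend n l y u"
  have r: "?y' \<in> {0..<n}" using wend_range[OF assms(4)] .
  obtain S1 where S1: "S1 \<in> F" "set (walk n l ?y' [j,i]) \<subseteq> S1" using walk_faceF[OF r, of "[j,i]"] assms by auto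
  obtain S2 where S2: "S2 \<in> F" "set (walk n l ?y' [i,j]) \<subseteq> S2" using walk_faceF[OF r, of "[i,j]"] assms by auto
  have "wend n l ?y' [j,i] = wend n l ?y' [i,j]" using wend_sum[OF r, of "[j,i]"] wend_sum[OF r, of "[i,j]"]
    by (simp del: wend.simps add: add_ac)
  then show "(walk n l ?y' [j,i], walk n l ?y' [i,j]) \<in> H"
    by (intro simplex_htp2[OF dcF S1(1) S1(2) _ S2(1) S2(2)]) (simp_all add: walk_last walk_length walk_hd del: walk.simps wend.simps)
  show "set [j,i] \<subseteq> {..<k}" using assms by auto
qed

lemma bubble: "i \<notin> set w \<Longrightarrow> i < k \<Longrightarrow> set u \<subseteq> {..<k} \<Longrightarrow> set w \<subseteq> {..<k} \<Longrightarrow> y \<in> {0..<n} \<Longrightarrow>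
  (walk n l y (u @ w @ [i]), walk n l y (u @ [i] @ w)) \<in> H"
proof (induction w arbitrary: u)
  case Nil then show ?case by (simp add: htp_refl)
next
  case (Cons j w)
  have "set (u@[j]) \<subseteq> {..<k}" using Cons.prems by auto
  then have "(walk n l y ((u@[j]) @ w @ [i]), walk n l y ((u@[j]) @ [i] @ w)) \<in> H"
    using Cons.IH[of "u@[j]"] Cons.prems by simp
  moreover have "(walk n l y (u@[j,i]@w), walk n l y (u@[i,j]@w)) \<in> H"
    using Cons.prems by (intro COMM) auto
  ultimately show ?case by (auto intro: htp_trans)
qed

lemma P1: assumes "i < k" "y \<in> {0..<n}"
  shows "(walk n l y (word k c @ [i]), walk n l y (word k (c(i := Suc (c i))))) \<in> H"
proof -
  define B where "B = (\<lambda>c t. replicate ((c::nat\<Rightarrow>nat) t) t)"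
  let ?c' = "c(i := Suc (c i))"
  define X where "X = concat (map (B c) [0..<i])"
  define Y where "Y = concat (map (B c) [Suc i..<k])"
  have split: "[0..<k] = [0..<i] @ i # [Suc i..<k]"
  proof -
    have "[0..<k] = [0..<i] @ [i..<k]" using assms(1)
      by (metis le_add_diff_inverse less_imp_le_nat upt_add_eq_append zero_le)
    also have "[i..<k] = i # [Suc i..<k]" using assms(1) by (simp add: upt_conv_Cons)
    finally show ?thesis .
  qed
  have w1: "word k c = X @ replicate (c i) i @ Y"
  proof -
    have "word k c = concat (map (B c) [0..<k])" unfolding word_def B_def ..
    also have "\<dots> = concat (map (B c) [0..<i]) @ B c i @ concat (map (B c) [Suc i..<k])"
      by (subst split) simp
    finally show ?thesis unfolding X_def Y_def by (simp add: B_def)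
  qed
  have m1: "map (B ?c') [0..<i] = map (B c) [0..<i]"
    by (rule map_cong[OF refl]) (simp add: B_def)
  have m2: "map (B ?c') [Suc i..<k] = map (B c) [Suc i..<k]"
    by (rule map_cong[OF refl]) (simp add: B_def)
  have m3: "B ?c' i = replicate (c i) i @ [i]" by (simp add: B_def replicate_append_same)
  have w2: "word k ?c' = X @ (replicate (c i) i @ [i]) @ Y"
  proof -
    have "word k ?c' = concat (map (B ?c') [0..<k])" unfolding word_def B_def ..
    also have "\<dots> = concat (map (B ?c') [0..<i]) @ B ?c' i @ concat (map (B ?c') [Suc i..<k])"
      by (subst split) simp
    finally show ?thesis unfolding X_def Y_def m1 m2 m3 by simp
  qed
  have iY: "i \<notin> set Y" unfolding Y_def B_def by auto
  have sets: "set (X @ replicate (c i) i) \<subseteq> {..<k}" "set Y \<subseteq> {..<k}"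
    using word_set[of k c] unfolding w1 by auto
  have "(walk n l y ((X @ replicate (c i) i) @ Y @ [i]), walk n l y ((X @ replicate (c i) i) @ [i] @ Y)) \<in> H"
    by (rule bubble[OF iY assms(1) sets assms(2)])
  then show ?thesis unfolding w1 w2 by simp
qed

lemma PW: "set ws \<subseteq> {..<k} \<Longrightarrow> y \<in> {0..<n} \<Longrightarrow>
  (walk n l y (word k c @ ws), walk n l y (word k (\<lambda>t. c t + count_list ws t))) \<in> H"
proof (induction ws arbitrary: c)
  case Nil then show ?case by (simp add: htp_refl)
next
  case (Cons i ws)
  define c' where "c' = c(i := Suc (c i))"
  have "(walk n l y ([] @ (word k c @ [i]) @ ws), walk n l y ([] @ word k c' @ ws)) \<in> H"
    using Cons.prems word_set[of k c] word_set[of k c'] P1[of i y c] unfolding c'_def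
    by (intro WC) auto
  moreover have "(walk n l y (word k c' @ ws), walk n l y (word k (\<lambda>t. c' t + count_list ws t))) \<in> H"
    using Cons.IH[of c'] Cons.prems by simp
  moreover have "(\<lambda>t. c' t + count_list ws t) = (\<lambda>t. c t + count_list (i#ws) t)" by (auto simp: c'_def)
  ultimately show ?case by (auto intro: htp_trans)
qed

end

context tz begin

lemma sum_full: "sum_list (map l [0..<k]) = n"
  by (simp add: interv_sum_list_conv_sum_set_nat atLeast0LessThan nsum)

lemma Z: assumes "y \<in> {0..<n}" "set u \<subseteq> {..<k}" shows "(walk n l y (u @ [0..<k]), walk n l y u) \<in> H"
proof -
  let ?y' = "wend n l y u"
  have r: "?y' \<in> {0..<n}" using wend_range[OF assms(1)] .
  have full: "wend n l ?y' [0..<k] = ?y'" using wend_sum[OF r, of "[0..<k]"] sum_full r by simp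
  obtain S where S: "S \<in> F" "set (walk n l ?y' [0..<k]) \<subseteq> S" using walk_faceF[OF r, of "[0..<k]"] by (auto simp: atLeast0LessThan)
  have "(walk n l ?y' [0..<k], [hd (walk n l ?y' [0..<k]), last (walk n l ?y' [0..<k])]) \<in> H"
    using simplex_htp[OF dcF S] k2 by (simp add: walk_length)
  then have "(walk n l ?y' [0..<k], [?y', ?y']) \<in> H" using full by (simp add: walk_hd walk_last)
  moreover have "([?y', ?y'], [?y']) \<in> H" by (rule dup_htp[OF single_F[THEN iffD2, OF r]])
  ultimately have h: "(walk n l ?y' [0..<k], [?y']) \<in> H" by (rule htp_trans)
  have e: "walk n l y (u @ [0..<k]) = butlast (walk n l y u) @ walk n l ?y' [0..<k] @ []"
    by (simp add: walk_append2)
  have "set (u @ [0..<k]) \<subseteq> {..<k}" using assms(2) by auto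
  then have "edge_path F (walk n l y (u @ [0..<k]))" by (rule walk_ep[OF assms(1)])
  then have "(butlast (walk n l y u) @ walk n l ?y' [0..<k] @ [], butlast (walk n l y u) @ [?y'] @ []) \<in> H"
    unfolding e by (intro htp_context[OF h dcF]) (simp_all add: walk_ne)
  moreover have "butlast (walk n l y u) @ [?y'] @ [] = walk n l y u"
    using walk_last[of n l y u] walk_ne[of n l y u] by (metis append_butlast_last_id append_Nil2)
  ultimately show ?thesis unfolding e by simp
qed

lemma P2: assumes "y \<in> {0..<n}" shows "(walk n l y (word k (\<lambda>t. c t + 1)), walk n l y (word k c)) \<in> H"
proof -
  have "(walk n l y (word k c @ [0..<k]), walk n l y (word k (\<lambda>t. c t + count_list [0..<k] t))) \<in> H"
    by (rule PW[OF _ assms]) (simp add: atLeast0LessThan)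
  moreover have "word k (\<lambda>t. c t + count_list [0..<k] t) = word k (\<lambda>t. c t + 1)"
    by (rule word_cong) (simp add: count_distinct)
  moreover have "(walk n l y (word k c @ [0..<k]), walk n l y (word k c)) \<in> H"
    using Z[OF assms word_set] .
  ultimately have "(walk n l y (word k (\<lambda>t. c t + 1)), walk n l y (word k c @ [0..<k])) \<in> H"
    "(walk n l y (word k c @ [0..<k]), walk n l y (word k c)) \<in> H" using htp_sym by auto
  then show ?thesis by (rule htp_trans)
qed

lemma P2iter: assumes "y \<in> {0..<n}" shows "(walk n l y (word k (\<lambda>t. c t + m)), walk n l y (word k c)) \<in> H"
proof (induction m)
  case 0 then show ?case by (simp add: htp_refl)
next
  case (Suc m)
  have "(walk n l y (word k (\<lambda>t. (c t + m) + 1)), walk n l y (word k (\<lambda>t. c t + m))) \<in> H"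
    using P2[OF assms] .
  then show ?case using Suc htp_trans by fastforce
qed

lemma word_zero: "word k (\<lambda>_. 0) = []"
  unfolding word_def by (induction k) auto

lemma NF: "edge_path F p \<Longrightarrow> \<exists>c. (p, walk n l (hd p) (word k c)) \<in> H"
proof (induction p rule: rev_induct)
  case Nil then show ?case by (simp add: edge_path_def)
next
  case (snoc v q)
  show ?case
  proof (cases "q = []")
    case True then show ?thesis by (intro exI[of _ "\<lambda>_. 0"]) (simp add: word_zero htp_refl)
  next
    case False
    have eq: "edge_path F q" "edge_path F [v]" "{last q, v} \<in> F"
      using snoc.prems False by (simp_all add: ep_append)
    obtain c where c: "(q, walk n l (hd q) (word k c)) \<in> H" using snoc.IH[OF eq(1)] by blast
    let ?y = "hd q"
    let ?W = "walk n l ?y (word k c)"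
    have yr: "?y \<in> {0..<n}" using ep_range[OF eq(1)] hd_in_set[OF False] by blast
    have h1: "([] @ q @ [v], [] @ ?W @ [v]) \<in> H"
      using htp_context[OF c dcF, of "[]" "[v]"] snoc.prems False by simp
    let ?u = "last q"
    have u: "?u = wend n l ?y (word k c)"
      using htp_props[OF c dcF eq(1)] by (simp add: walk_last)
    have ur: "?u \<in> {0..<n}" using u wend_range[OF yr] by simp
    obtain I where I: "I \<noteq> {}" "I \<subseteq> {..<k}" "v = (?u + sum l I) mod n" using edge_type[OF eq(3)] by blast
    have finI: "finite I" using I(2) finite_subset by blast
    define ws where "ws = sorted_list_of_set I"
    have ws: "set ws = I" "distinct ws" "ws \<noteq> []" using finI I(1) by (auto simp: ws_def)
    have vw: "wend n l ?u ws = v" using wend_sum[OF ur, of ws] I(3) ws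
      by (simp add: sum_list_distinct_conv_sum_set)
    obtain S2 where S2: "S2 \<in> F" "set (walk n l ?u ws) \<subseteq> S2" using walk_faceF[OF ur ws(2)] ws(1) I(2) by auto
    have h0: "([?u, v], walk n l ?u ws) \<in> H"
      by (rule simplex_htp2[OF dcF eq(3) _ _ S2]) (use ws(3) vw in \<open>auto simp: walk_length walk_hd walk_last Suc_le_eq\<close>)
    have Wd: "?W = butlast ?W @ [?u]" using u walk_last[of n l ?y "word k c"] walk_ne[of n l ?y "word k c"]
      by (metis append_butlast_last_id)
    have epW: "edge_path F (?W @ [v])"
      using walk_ep[OF yr word_set] eq(2,3) u by (simp add: ep_append walk_ne walk_last)
    have "(butlast ?W @ [?u, v] @ [], butlast ?W @ walk n l ?u ws @ []) \<in> H"
      using epW Wd by (intro htp_context[OF h0 dcF]) (metis append.assoc append_Cons append_Nil append_Nil2, simp)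
    then have h2: "(?W @ [v], walk n l ?y (word k c @ ws)) \<in> H"
      using Wd u by (metis append.assoc append_Cons append_Nil append_Nil2 walk_append2)
    have h3: "(walk n l ?y (word k c @ ws), walk n l ?y (word k (\<lambda>t. c t + count_list ws t))) \<in> H"
      using PW[OF _ yr] ws(1) I(2) by simp
    have "(q @ [v], walk n l ?y (word k (\<lambda>t. c t + count_list ws t))) \<in> H"
      using htp_trans[OF htp_trans[OF h1[simplified] h2] h3] .
    then show ?thesis using False by auto
  qed
qed

lemma injH: assumes "edge_path F p" "edge_path F q" "hd p = hd q"
  "\<forall>j. omega_path n k l p j = omega_path n k l q j" shows "(p,q) \<in> H"
proof -
  let ?y = "hd p"
  have yr: "?y \<in> {0..<n}" using ep_range[OF assms(1)] hd_in_set[OF ep_ne[OF assms(1)]] by blast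
  obtain c where c: "(p, walk n l ?y (word k c)) \<in> H" using NF[OF assms(1)] by blast
  obtain d where d: "(q, walk n l ?y (word k d)) \<in> H" using NF[OF assms(2)] assms(3) by auto
  have lam: "lamv k c j = lamv k d j" for j
    using word_omega[OF yr, of c j] word_omega[OF yr, of d j] htp_omega[OF c, of j] htp_omega[OF d, of j] assms(4)
    by simp
  define \<delta> where "\<delta> = int (c 0) - int (d 0)"
  have k0: "0 < k" using k2 by simp
  have diff: "int (c t) - int (d t) = \<delta>" if t: "t < k" for t
  proof -
    have "int k * int (c t) - (\<Sum>i<k. int (c i)) = int k * int (d t) - (\<Sum>i<k. int (d i))"
      using lam[of t] t by (simp add: lamv_def)
    moreover have "int k * int (c 0) - (\<Sum>i<k. int (c i)) = int k * int (d 0) - (\<Sum>i<k. int (d i))"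
      using lam[of 0] k0 by (simp add: lamv_def)
    ultimately have "int k * (int (c t) - int (d t)) = int k * \<delta>"
      unfolding \<delta>_def by (simp add: algebra_simps)
    then show ?thesis using k0 by simp
  qed
  have cd: "(walk n l ?y (word k c), walk n l ?y (word k d)) \<in> H"
  proof (cases "\<delta> \<ge> 0")
    case True
    have "word k c = word k (\<lambda>t. d t + nat \<delta>)"
    proof (rule word_cong, intro allI impI)
      fix t assume "t < k" then have "int (c t) - int (d t) = \<delta>" by (rule diff)
      then show "c t = d t + nat \<delta>" using True by linarith
    qed
    then show ?thesis using P2iter[OF yr, of d "nat \<delta>"] by simp
  next
    case False
    have "word k d = word k (\<lambda>t. c t + nat (- \<delta>))"
    proof (rule word_cong, intro allI impI)
      fix t assume "t < k" then have "int (c t) - int (d t) = \<delta>" by (rule diff)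
      then show "d t = c t + nat (- \<delta>)" using False by linarith
    qed
    then show ?thesis using P2iter[OF yr, of c "nat (- \<delta>)"] htp_sym by fastforce
  qed
  show ?thesis using c cd d htp_sym htp_trans by metis
qed

lemma omega_Lambda: assumes "edge_path F p" shows "omega_path n k l p \<in> Lambda k"
proof -
  have yr: "hd p \<in> {0..<n}" using ep_range[OF assms] hd_in_set[OF ep_ne[OF assms]] by blast
  obtain c where c: "(p, walk n l (hd p) (word k c)) \<in> H" using NF[OF assms] by blast
  have "omega_path n k l p = lamv k c"
    using htp_omega[OF c] word_omega[OF yr] by auto
  then show ?thesis using lamv_Lambda by simp
qed

lemma lamv_surj: assumes "x \<in> Lambda k" shows "\<exists>c. lamv k c = x"
proof -
  have k0: "0 < k" using k2 by simp
  define \<mu> where "\<mu> = Min (x ` {..<k})"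
  have \<mu>: "\<mu> \<le> x i" if "i < k" for i unfolding \<mu>_def using that by auto
  obtain m where m: "m < k" "x m = \<mu>" unfolding \<mu>_def using k0
    by (metis (no_types, lifting) Min_in empty_iff finite_imageI finite_lessThan image_iff lessThan_iff)
  have dv: "int k dvd x i - \<mu>" if "i < k" for i
  proof -
    have "x i mod int k = x m mod int k" using assms that m(1) unfolding Lambda_def by blast
    then show ?thesis using m(2) by (simp add: mod_eq_dvd_iff)
  qed
  define c where "c = (\<lambda>i. nat ((x i - \<mu>) div int k))"
  have ci: "int k * int (c i) = x i - \<mu>" if "i < k" for i
  proof -
    have "0 \<le> (x i - \<mu>) div int k" using \<mu>[OF that] k0 by (simp add: div_int_pos_iff)
    then have "int (c i) = (x i - \<mu>) div int k" unfolding c_def by simp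
    then show ?thesis using dv[OF that] by (simp add: dvd_mult_div_cancel)
  qed
  have "int k * (\<Sum>i<k. int (c i)) = (\<Sum>i<k. x i - \<mu>)"
    by (simp add: sum_distrib_left ci)
  also have "\<dots> = - int k * \<mu>"
  proof -
    have "(\<Sum>i<k. x i) = 0" using assms unfolding Lambda_def by blast
    then show ?thesis by (simp add: sum_subtractf)
  qed
  finally have "int k * (\<Sum>i<k. int (c i)) = int k * (- \<mu>)" by simp
  then have "int k * ((\<Sum>i<k. int (c i)) + \<mu>) = 0" by (simp add: algebra_simps)
  then have sc: "(\<Sum>i<k. int (c i)) = - \<mu>" using k0 by simp
  have "lamv k c j = x j" for j
  proof (cases "j < k")
    case True then show ?thesis using ci sc by (simp add: lamv_def)
  next
    case False
    have "\<forall>i\<ge>k. x i = 0" using assms unfolding Lambda_def by blast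
    then show ?thesis using False by (simp add: lamv_def)
  qed
  then show ?thesis by blast
qed

end


lemma sorted_take_filter: "sorted (map f xs) \<Longrightarrow>
  take (length (filter (\<lambda>x. f x \<le> (r::nat)) xs)) xs = filter (\<lambda>x. f x \<le> r) xs"
proof (induction xs)
  case Nil then show ?case by simp
next
  case (Cons a xs)
  have s: "sorted (map f xs)" "\<forall>y\<in>set xs. f a \<le> f y" using Cons.prems by auto
  show ?case
  proof (cases "f a \<le> r")
    case True then show ?thesis using Cons.IH[OF s(1)] by simp
  next
    case False
    then have "filter (\<lambda>x. f x \<le> r) xs = []" using s(2) by (auto simp: filter_empty_conv)
    then show ?thesis using False by simp
  qed
qed

lemma set_take_nth: "m \<le> length xs \<Longrightarrow> set (take m xs) = (!) xs ` {..<m}"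
  using nth_image[of m xs] by (simp add: atLeast0LessThan)

lemma chain_perm: assumes "finite C" "\<forall>I\<in>C. I \<subseteq> {..<k}" "\<forall>I\<in>C. \<forall>J\<in>C. I \<subseteq> J \<or> J \<subseteq> I"
  shows "\<exists>\<sigma>. \<sigma> permutes {..<k} \<and> (\<forall>I\<in>C. \<sigma> ` {..<card I} = I)"
proof -
  define C' where "C' = insert {..<k} C"
  have finC': "finite C'" using assms(1) by (simp add: C'_def)
  have subC': "\<forall>I\<in>C'. I \<subseteq> {..<k}" using assms(2) by (simp add: C'_def)
  have chC': "\<forall>I\<in>C'. \<forall>J\<in>C'. I \<subseteq> J \<or> J \<subseteq> I" using assms(2,3) by (auto simp: C'_def)
  define rank where "rank i = Min (card ` {J\<in>C'. i \<in> J})" for i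
  have key: "{i \<in> {..<k}. rank i \<le> card I} = I" if I: "I \<in> C'" for I
  proof
    show "I \<subseteq> {i \<in> {..<k}. rank i \<le> card I}"
    proof
      fix i assume i: "i \<in> I"
      have "rank i \<le> card I" unfolding rank_def using finC' I i by (intro Min_le) auto
      then show "i \<in> {i \<in> {..<k}. rank i \<le> card I}" using subC' I i by auto
    qed
  next
    show "{i \<in> {..<k}. rank i \<le> card I} \<subseteq> I"
    proof
      fix i assume i: "i \<in> {i \<in> {..<k}. rank i \<le> card I}"
      have ne: "{J\<in>C'. i \<in> J} \<noteq> {}" using i by (auto simp: C'_def)
      have "rank i \<in> card ` {J\<in>C'. i \<in> J}" unfolding rank_def using finC' ne by (intro Min_in) auto
      then obtain J where J: "J \<in> C'" "i \<in> J" "rank i = card J" by auto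
      show "i \<in> I"
      proof (rule ccontr)
        assume "i \<notin> I"
        then have "I \<subset> J" using chC' I J by blast
        moreover have "finite J" using subC' J(1) finite_subset by blast
        ultimately have "card I < card J" by (rule psubset_card_mono[rotated])
        then show False using i J(3) by simp
      qed
    qed
  qed
  define ws where "ws = sort_key rank [0..<k]"
  have ws: "distinct ws" "set ws = {..<k}" "sorted (map rank ws)" "length ws = k"
    by (auto simp: ws_def distinct_sort atLeast0LessThan)
  obtain \<sigma> where \<sigma>: "\<sigma> permutes {..<k}" "\<forall>j<length ws. \<sigma> j = ws!j"
    using ext_perm[OF ws(1), of k] ws(2) by blast
  have "\<sigma> ` {..<card I} = I" if I: "I \<in> C" for I
  proof -
    have IC: "I \<in> C'" using I by (simp add: C'_def)
    let ?P = "\<lambda>x. rank x \<le> card I"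
    have sf: "set (filter ?P ws) = I" using key[OF IC] ws(2) by auto
    have "length (filter ?P ws) = card I"
      using distinct_card[of "filter ?P ws"] ws(1) sf by simp
    then have tk: "take (card I) ws = filter ?P ws" using sorted_take_filter[OF ws(3)] by metis
    have ck: "card I \<le> k" using subC' IC card_mono[of "{..<k}" I] by auto
    have "\<sigma> ` {..<card I} = (!) ws ` {..<card I}" using \<sigma>(2) ck ws(4) by (auto simp: image_iff)
    also have "\<dots> = set (take (card I) ws)" using ck ws(4) by (simp add: set_take_nth)
    finally show ?thesis using tk sf by simp
  qed
  then show ?thesis using \<sigma>(1) by blast
qed

lemma avec_empty: "avec k {} j = 0" by (simp add: avec_def)

lemma avec_sum: "finite I \<Longrightarrow> avec k I j = (\<Sum>i\<in>I. avec k {i} j)"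
proof (induction I rule: finite_induct)
  case empty then show ?case by (simp add: avec_empty)
next
  case (insert x F)
  have "avec k (insert x F) j = avec k ({x} \<union> F) j" by simp
  also have "\<dots> = avec k {x} j + avec k F j" using insert by (intro avec_union) auto
  finally show ?case using insert by simp
qed


context tz begin

lemma cls_mem: "\<alpha> \<in> htp_class F p \<longleftrightarrow> (p, \<alpha>) \<in> H" by (simp add: htp_class_def)

lemma cls_eq: "(p,q) \<in> H \<Longrightarrow> htp_class F p = htp_class F q"
  unfolding htp_class_def using htp_sym htp_trans by blast

lemma Omega_cls: "omega_path n k l (SOME q. q \<in> htp_class F p) = omega_path n k l p"
proof -
  have "p \<in> htp_class F p" by (simp add: cls_mem htp_refl)
  then have "(SOME q. q \<in> htp_class F p) \<in> htp_class F p" by (rule someI)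
  then have "(p, SOME q. q \<in> htp_class F p) \<in> H" by (simp add: cls_mem)
  then show ?thesis using htp_omega by fastforce
qed

lemma CV_rep: "c \<in> cover_vertices F v0 \<Longrightarrow> \<exists>p. edge_path F p \<and> hd p = v0 \<and> c = htp_class F p"
  unfolding cover_vertices_def by blast

lemma CV_intro: "edge_path F p \<Longrightarrow> hd p = v0 \<Longrightarrow> htp_class F p \<in> cover_vertices F v0"
  unfolding cover_vertices_def by blast

lemma main:
  assumes v0: "v0 \<in> {0..<n}"
  defines "\<Omega> \<equiv> (\<lambda>c. omega_path n k l (SOME p. p \<in> c))"
  defines "CV \<equiv> cover_vertices F v0"
  shows "inj_on \<Omega> CV" "\<Omega> ` CV = Lambda k"
    "\<And>S. S \<subseteq> CV \<Longrightarrow> S \<in> cover_faces F v0 \<longleftrightarrow> \<Omega> ` S \<in> delone_faces k"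
proof -
  have Om: "\<Omega> (htp_class F p) = omega_path n k l p" for p unfolding \<Omega>_def by (rule Omega_cls)
  show inj: "inj_on \<Omega> CV"
  proof (rule inj_onI)
    fix c1 c2 assume c: "c1 \<in> CV" "c2 \<in> CV" "\<Omega> c1 = \<Omega> c2"
    obtain p1 where p1: "edge_path F p1" "hd p1 = v0" "c1 = htp_class F p1" using CV_rep c(1) CV_def by blast
    obtain p2 where p2: "edge_path F p2" "hd p2 = v0" "c2 = htp_class F p2" using CV_rep c(2) CV_def by blast
    have "omega_path n k l p1 = omega_path n k l p2" using c(3) p1(3) p2(3) Om by simp
    then have "(p1,p2) \<in> H" using p1 p2 by (intro injH) auto
    then show "c1 = c2" using p1(3) p2(3) cls_eq by simp
  qed
  show img: "\<Omega> ` CV = Lambda k"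
  proof
    show "\<Omega> ` CV \<subseteq> Lambda k"
    proof
      fix x assume "x \<in> \<Omega> ` CV"
      then obtain c where c: "c \<in> CV" "x = \<Omega> c" by blast
      obtain p where p: "edge_path F p" "hd p = v0" "c = htp_class F p" using CV_rep c(1) CV_def by blast
      show "x \<in> Lambda k" using c(2) p(3) Om omega_Lambda[OF p(1)] by simp
    qed
  next
    show "Lambda k \<subseteq> \<Omega> ` CV"
    proof
      fix x assume x: "x \<in> Lambda k"
      obtain c where c: "lamv k c = x" using lamv_surj[OF x] by blast
      let ?p = "walk n l v0 (word k c)"
      have ep: "edge_path F ?p" using walk_ep[OF v0 word_set] .
      have "htp_class F ?p \<in> CV" using CV_intro[OF ep] walk_hd CV_def by simp
      moreover have "\<Omega> (htp_class F ?p) = x" using Om word_omega[OF v0] c by auto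
      ultimately show "x \<in> \<Omega> ` CV" by force
    qed
  qed
  fix S assume S: "S \<subseteq> CV"
  show "S \<in> cover_faces F v0 \<longleftrightarrow> \<Omega> ` S \<in> delone_faces k"
  proof
    assume SF: "S \<in> cover_faces F v0"
    then have S1: "S \<noteq> {}" "finite S" and EF: "{last \<alpha> | \<alpha>. \<alpha> \<in> \<Union>S} \<in> F"
      and PW: "\<forall>c\<in>S. \<forall>c'\<in>S. \<forall>\<alpha>\<in>c. \<forall>\<beta>\<in>c'. (\<alpha> @ rev \<beta>, [v0]) \<in> H"
      unfolding cover_faces_def by blast+
    obtain x \<sigma> where x: "x \<in> {0..<n}" "\<sigma> permutes {..<k}"
      and P: "\<forall>u\<in>{last \<alpha> | \<alpha>. \<alpha> \<in> \<Union>S}. \<exists>a<k. u = (x + Ps l \<sigma> a) mod n"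
      using face_pos[OF EF] by blast
    define rep where "rep c = (SOME p. edge_path F p \<and> hd p = v0 \<and> c = htp_class F p)" for c
    have rep: "edge_path F (rep c) \<and> hd (rep c) = v0 \<and> c = htp_class F (rep c)" if "c \<in> S" for c
    proof -
      have "\<exists>p. edge_path F p \<and> hd p = v0 \<and> c = htp_class F p" using CV_rep that S CV_def by blast
      then show ?thesis unfolding rep_def by (rule someI_ex)
    qed
    have repin: "rep c \<in> c" if "c \<in> S" for c
      using rep[OF that] by (metis cls_mem htp_refl)
    define pos where "pos c = (SOME a. a < k \<and> last (rep c) = (x + Ps l \<sigma> a) mod n)" for c
    have pos: "pos c < k \<and> last (rep c) = (x + Ps l \<sigma> (pos c)) mod n" if "c \<in> S" for c
    proof -
      have "last (rep c) \<in> {last \<alpha> | \<alpha>. \<alpha> \<in> \<Union>S}" using repin[OF that] that by blast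
      then have "\<exists>a. a < k \<and> last (rep c) = (x + Ps l \<sigma> a) mod n" using P by blast
      then show ?thesis unfolding pos_def by (rule someI_ex)
    qed
    obtain c0 where c0: "c0 \<in> S" using S1(1) by blast
    have key: "\<Omega> c j = \<Omega> c0 j - Av k \<sigma> (pos c0) j + Av k \<sigma> (pos c) j" if c: "c \<in> S" for c j
    proof -
      have h: "(rep c @ rev (rep c0), [v0]) \<in> H" using PW c c0 repin by blast
      have e0: "rep c0 \<noteq> []" "rep c \<noteq> []" using rep c c0 ep_ne by blast+
      have "omega_path n k l (rep c @ rev (rep c0)) j = 0"
        using htp_omega[OF h, of j] by (simp add: op_single)
      moreover have "omega_path n k l (rep c @ rev (rep c0)) j =
        omega_path n k l (rep c) j + omega_edge n k l (last (rep c)) (last (rep c0)) j - omega_path n k l (rep c0) j"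
        using op_append[of "rep c" "rev (rep c0)"] e0 op_rev[of "rep c0" j] rep[OF c0] by (simp add: hd_rev)
      moreover have "omega_edge n k l (last (rep c)) (last (rep c0)) j = Av k \<sigma> (pos c0) j - Av k \<sigma> (pos c) j"
        using pos[OF c] pos[OF c0] edge_pos(2)[OF x] by simp
      ultimately have "omega_path n k l (rep c) j = omega_path n k l (rep c0) j - Av k \<sigma> (pos c0) j + Av k \<sigma> (pos c) j"
        by simp
      then show ?thesis using rep[OF c] rep[OF c0] Om by metis
    qed
    define z where "z = (\<lambda>j. \<Omega> c0 j - Av k \<sigma> (pos c0) j)"
    have "\<Omega> c0 \<in> Lambda k" using img S c0 by blast
    moreover have "Av k \<sigma> (pos c0) \<in> Lambda k" unfolding Av_def
      using permutes_image[OF x(2)] pos[OF c0] by (intro avec_in_Lambda) auto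
    ultimately have zL: "z \<in> Lambda k" unfolding z_def by (rule Lambda_diff)
    define C where "C = (\<lambda>c. \<sigma> ` {..<pos c}) ` S"
    have Cp: "I \<subset> {..<k}" if IC: "I \<in> C" for I
    proof -
      obtain c where c: "c \<in> S" "I = \<sigma> ` {..<pos c}" using IC C_def by blast
      have "I \<subseteq> {..<k}" using c pos[OF c(1)] permutes_image[OF x(2)] by auto
      moreover have "card I = pos c" using c(2) permutes_inj_on[OF x(2)]
        by (simp add: card_image inj_on_subset)
      ultimately show ?thesis using pos[OF c(1)] by auto
    qed
    have Cc: "\<forall>I\<in>C. \<forall>J\<in>C. I \<subseteq> J \<or> J \<subseteq> I"
    proof (intro ballI)
      fix I J assume "I \<in> C" "J \<in> C"
      then obtain a b where "I = \<sigma> ` {..<a}" "J = \<sigma> ` {..<b}" unfolding C_def by blast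
      moreover have "{..<a} \<subseteq> {..<b} \<or> {..<b} \<subseteq> {..<a}" using nat_le_linear[of a b] by auto
      ultimately show "I \<subseteq> J \<or> J \<subseteq> I" using image_mono by metis
    qed
    have "\<Omega> ` S = (\<lambda>c. (\<lambda>i. z i + Av k \<sigma> (pos c) i)) ` S"
      using key unfolding z_def by (intro image_cong) auto
    also have "\<dots> = (\<lambda>I. (\<lambda>i. z i + avec k I i)) ` C" unfolding C_def Av_def by (simp add: image_image)
    finally have "\<Omega> ` S = (\<lambda>I. (\<lambda>i. z i + avec k I i)) ` C" .
    moreover have "finite C" "C \<noteq> {}" using S1 by (auto simp: C_def)
    ultimately show "\<Omega> ` S \<in> delone_faces k" unfolding delone_faces_def using zL Cp Cc by blast
  next
    assume D: "\<Omega> ` S \<in> delone_faces k"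
    obtain z C where z: "z \<in> Lambda k" and C: "finite C" "C \<noteq> {}" "\<forall>I\<in>C. I \<subset> {..<k}"
      "\<forall>I\<in>C. \<forall>J\<in>C. I \<subseteq> J \<or> J \<subseteq> I" and img2: "\<Omega> ` S = (\<lambda>I. (\<lambda>i. z i + avec k I i)) ` C"
      using D unfolding delone_faces_def by blast
    have injS: "inj_on \<Omega> S" using inj S by (rule inj_on_subset)
    have S1: "S \<noteq> {}" using img2 C(2) by auto
    have S2: "finite S" using img2 C(1) finite_imageD[OF _ injS] by simp
    obtain \<sigma> where \<sigma>: "\<sigma> permutes {..<k}" "\<forall>I\<in>C. \<sigma> ` {..<card I} = I"
      using chain_perm[OF C(1) _ C(4)] C(3) by blast
    obtain cz where cz: "lamv k cz = z" using lamv_surj[OF z] by blast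
    let ?W = "word k cz"
    define y where "y = wend n l v0 ?W"
    have yr: "y \<in> {0..<n}" using wend_range[OF v0] y_def by simp
    define gam where "gam I = walk n l v0 (?W @ sorted_list_of_set I)" for I
    have gI: "edge_path F (gam I) \<and> hd (gam I) = v0 \<and>
       omega_path n k l (gam I) = (\<lambda>i. z i + avec k I i) \<and> last (gam I) = (y + Ps l \<sigma> (card I)) mod n"
      if I: "I \<in> C" for I
    proof -
      have Ik: "I \<subseteq> {..<k}" "finite I" using C(3) I finite_subset by auto
      let ?ws = "sorted_list_of_set I"
      have ws: "set ?ws = I" "distinct ?ws" using Ik by auto
      have sk: "set (?W @ ?ws) \<subseteq> {..<k}" using word_set[of k cz] ws Ik by auto
      have ep: "edge_path F (gam I)" unfolding gam_def by (rule walk_ep[OF v0 sk])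
      have om: "omega_path n k l (gam I) j = z j + avec k I j" for j
      proof -
        have "omega_path n k l (gam I) j = sum_list (map (\<lambda>i. avec k {i} j) ?W) + sum_list (map (\<lambda>i. avec k {i} j) ?ws)"
          unfolding gam_def using walk_omega[OF v0 sk] by simp
        also have "sum_list (map (\<lambda>i. avec k {i} j) ?W) = z j"
          using word_sum word_avec cz by simp
        also have "sum_list (map (\<lambda>i. avec k {i} j) ?ws) = avec k I j"
          using ws avec_sum[OF Ik(2)] by (simp add: sum_list_distinct_conv_sum_set)
        finally show ?thesis .
      qed
      have "last (gam I) = wend n l y ?ws" unfolding gam_def y_def by (simp add: walk_last wend_append)
      also have "\<dots> = (y + sum l I) mod n" using wend_sum[OF yr] ws by (simp add: sum_list_distinct_conv_sum_set)
      also have "sum l I = Ps l \<sigma> (card I)"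
      proof -
        have ck: "{..<card I} \<subseteq> {..<k}" using C(3) I psubset_card_mono[of "{..<k}" I] by auto
        have "sum l I = sum l (\<sigma> ` {..<card I})" using \<sigma>(2) I by simp
        also have "\<dots> = Ps l \<sigma> (card I)" unfolding Ps_def using sum_img[OF \<sigma>(1) ck] .
        finally show ?thesis .
      qed
      finally show ?thesis using ep om walk_hd gam_def by auto
    qed
    have cI: "\<exists>I\<in>C. c = htp_class F (gam I)" if c: "c \<in> S" for c
    proof -
      obtain I where I: "I \<in> C" "\<Omega> c = (\<lambda>i. z i + avec k I i)" using img2 c by blast
      have "htp_class F (gam I) \<in> CV" using CV_intro gI[OF I(1)] CV_def by simp
      moreover have "\<Omega> (htp_class F (gam I)) = \<Omega> c" using Om gI[OF I(1)] I(2) by simp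
      ultimately have "c = htp_class F (gam I)" using inj c S by (metis inj_onD subsetD)
      then show ?thesis using I(1) by blast
    qed
    have lastI: "last \<alpha> = (y + Ps l \<sigma> (card I)) mod n \<and> edge_path F \<alpha> \<and> hd \<alpha> = v0 \<and> omega_path n k l \<alpha> = (\<lambda>i. z i + avec k I i)"
      if "I \<in> C" "\<alpha> \<in> htp_class F (gam I)" for I \<alpha>
    proof -
      have h: "(gam I, \<alpha>) \<in> H" using that(2) cls_mem by simp
      show ?thesis using htp_props[OF h dcF] gI[OF that(1)] htp_omega[OF h] by auto
    qed
    define E where "E = {last \<alpha> | \<alpha>. \<alpha> \<in> \<Union>S}"
    have Esub: "E \<subseteq> tonn_max_simplex n k l y \<sigma>"
    proof
      fix u assume "u \<in> E"
      then obtain \<alpha> c where a: "u = last \<alpha>" "\<alpha> \<in> c" "c \<in> S" unfolding E_def by blast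
      obtain I where I: "I \<in> C" "c = htp_class F (gam I)" using cI[OF a(3)] by blast
      have "card I \<le> k" using C(3) I(1) psubset_card_mono[of "{..<k}" I] by auto
      then show "u \<in> tonn_max_simplex n k l y \<sigma>" using lastI[OF I(1)] a I tms_mem[OF yr \<sigma>(1)] by auto
    qed
    have Ene: "E \<noteq> {}"
    proof -
      obtain c where c: "c \<in> S" using S1 by blast
      obtain I where I: "I \<in> C" "c = htp_class F (gam I)" using cI[OF c] by blast
      have "gam I \<in> c" using I(2) cls_mem htp_refl by blast
      then show ?thesis unfolding E_def using c by blast
    qed
    have EF: "E \<in> F" by (rule tms_F[OF yr \<sigma>(1) Esub Ene])
    have pw: "(\<alpha> @ rev \<beta>, [v0]) \<in> H" if c: "c \<in> S" "c' \<in> S" "\<alpha> \<in> c" "\<beta> \<in> c'" for c c' \<alpha> \<beta>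
    proof -
      obtain I where I: "I \<in> C" "c = htp_class F (gam I)" using cI[OF c(1)] by blast
      obtain J where J: "J \<in> C" "c' = htp_class F (gam J)" using cI[OF c(2)] by blast
      have a: "last \<alpha> = (y + Ps l \<sigma> (card I)) mod n" "edge_path F \<alpha>" "hd \<alpha> = v0"
        "omega_path n k l \<alpha> = (\<lambda>i. z i + avec k I i)" using lastI[OF I(1)] c(3) I(2) by auto
      have b: "last \<beta> = (y + Ps l \<sigma> (card J)) mod n" "edge_path F \<beta>" "hd \<beta> = v0"
        "omega_path n k l \<beta> = (\<lambda>i. z i + avec k J i)" using lastI[OF J(1)] c(4) J(2) by auto
      have ne: "\<alpha> \<noteq> []" "\<beta> \<noteq> []" using a(2) b(2) ep_ne by auto
      have "{last \<alpha>, last \<beta>} \<subseteq> E" unfolding E_def using c by blast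
      then have lb: "{last \<alpha>, last \<beta>} \<in> F" using dcD[OF dcF EF] by blast
      have ep: "edge_path F (\<alpha> @ rev \<beta>)" using a(2) ep_rev[OF b(2)] lb ne
        by (simp add: ep_append hd_rev)
      have cI': "card I < k" "card J < k" using C(3) I(1) J(1) psubset_card_mono[of "{..<k}"] by auto
      have AvI: "Av k \<sigma> (card I) = avec k I" "Av k \<sigma> (card J) = avec k J"
        unfolding Av_def using \<sigma>(2) I(1) J(1) by auto
      have "omega_path n k l (\<alpha> @ rev \<beta>) j = omega_path n k l [v0] j" for j
      proof -
        have "omega_path n k l (\<alpha> @ rev \<beta>) j =
          omega_path n k l \<alpha> j + omega_edge n k l (last \<alpha>) (last \<beta>) j - omega_path n k l \<beta> j"
          using op_append[of \<alpha> "rev \<beta>"] ne op_rev[OF b(2), of j] by (simp add: hd_rev)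
        also have "omega_edge n k l (last \<alpha>) (last \<beta>) j = Av k \<sigma> (card J) j - Av k \<sigma> (card I) j"
          using a(1) b(1) edge_pos(2)[OF yr \<sigma>(1) cI'] by simp
        finally show ?thesis using a(4) b(4) AvI by (simp add: op_single)
      qed
      moreover have "edge_path F [v0]" using v0 by (simp add: ep_single single_F)
      ultimately show ?thesis using ep a(3) ne by (intro injH) auto
    qed
    show "S \<in> cover_faces F v0" unfolding cover_faces_def
      using S1 S2 S EF pw CV_def E_def by blast
  qed
qed

end

theorem proposition5p7:
  fixes k :: nat and l :: "nat \<Rightarrow> int" and n v0 :: int
  assumes "k \<ge> 2" and "\<forall>i<k. l i > 0" and "generic k l" and "reduced k l"
    and "n = (\<Sum>i<k. l i)" and "v0 \<in> {0..<n}"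
  shows "(\<forall>p q. edge_path (tonnetz n k l) p \<and> hd p = v0 \<and> (p, q) \<in> comb_htp (tonnetz n k l)
             \<longrightarrow> omega_path n k l p = omega_path n k l q)
    \<and> (let \<Omega> = (\<lambda>c. omega_path n k l (SOME p. p \<in> c)) in
         bij_betw \<Omega> (cover_vertices (tonnetz n k l) v0) (Lambda k) \<and>
         (\<forall>S \<subseteq> cover_vertices (tonnetz n k l) v0.
             S \<in> cover_faces (tonnetz n k l) v0 \<longleftrightarrow> \<Omega> ` S \<in> delone_faces k))"
proof -
  interpret tz k l n
    by (unfold_locales) (use assms in auto)
  have P1: "\<forall>p q. edge_path (tonnetz n k l) p \<and> hd p = v0 \<and> (p, q) \<in> comb_htp (tonnetz n k l)
             \<longrightarrow> omega_path n k l p = omega_path n k l q"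
    using htp_omega by blast
  show ?thesis unfolding Let_def bij_betw_def
    using P1 main[OF assms(6)] by blast
qed

end
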